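(* A shift space $X$ is eventually dendric if and only if (1) the sequence $(s_n(X))_n$ is eventually constant, and (2) $\lim_{n\to\infty} s_n(X)=\omega(X)$.
   Context: $A$ is a finite alphabet; a shift space is a closed shift-invariant subset $X\subseteq A^{\mathbb Z}$; $\mathcal L(X)$ is its set of finite factors, $\mathcal L_n(X)=\mathcal L(X)\cap A^n$, $\mathcal L_{\ge n}(X)=\bigcup_{k\ge n}\mathcal L_k(X)$, $p_n(X)=\mathrm{Card}\,\mathcal L_n(X)$, $s_n(X)=p_{n+1}(X)-p_n(X)$. For $w\in\mathcal L(X)$, the extension graph $\mathcal E_1(w)$ is the undirected bipartite graph with vertex set the disjoint union of $\{a\in A: aw\in\mathcal L(X)\}$ and $\{b\in A: wb\in\mathcal L(X)\}$, and an edge $(a,b)$ iff $awb\in\mathcal L(X)$. $X$ is eventually dendric (with threshold $m$) if $\mathcal E_1(w)$ is a tree for every $w\in\mathcal L_{\ge m}(X)$, for some $m\ge0$. For $x\in A^{\mathbb Z}$, $x^+=x_0x_1\cdots$. Two elements $x,y\in X$ are right asymptotically equivalent if some shifts $\sigma^i(x),\sigma^j(y)$ satisfy $\sigma^i(x)^+=\sigma^j(y)^+$; a right asymptotic class is an equivalence class containing more than one orbit. For such a class $C$, $\omega(C)$ is the number of orbits contained in $C$ minus one, and $\omega(X)=\sum_C\omega(C)$, the sum over all right asymptotic classes $C$ of $X$. *)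

theory Defs
  imports "HOL-Analysis.Analysis"
begin

definition shift :: "(int \<Rightarrow> 'a) \<Rightarrow> (int \<Rightarrow> 'a)" where
  "shift x = (\<lambda>i. x (i + 1))"

definition is_shift_space :: "(int \<Rightarrow> 'a::finite) set \<Rightarrow> bool" where
  "is_shift_space X \<longleftrightarrow>
     closedin (product_topology (\<lambda>_::int. discrete_topology (UNIV::'a set)) UNIV) X
     \<and> shift ` X = X"

definition factor_at :: "(int \<Rightarrow> 'a) \<Rightarrow> int \<Rightarrow> nat \<Rightarrow> 'a list" where
  "factor_at x i n = map (\<lambda>k. x (i + int k)) [0..<n]"

definition lang :: "(int \<Rightarrow> 'a) set \<Rightarrow> 'a list set" where
  "lang X = {w. \<exists>x\<in>X. \<exists>i. w = factor_at x i (length w)}"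

definition lang_n :: "(int \<Rightarrow> 'a) set \<Rightarrow> nat \<Rightarrow> 'a list set" where
  "lang_n X n = {w \<in> lang X. length w = n}"

definition p_cplx :: "(int \<Rightarrow> 'a) set \<Rightarrow> nat \<Rightarrow> nat" where
  "p_cplx X n = card (lang_n X n)"

definition s_cplx :: "(int \<Rightarrow> 'a) set \<Rightarrow> nat \<Rightarrow> int" where
  "s_cplx X n = int (p_cplx X (Suc n)) - int (p_cplx X n)"

definition is_cycle :: "'v set \<Rightarrow> ('v \<Rightarrow> 'v \<Rightarrow> bool) \<Rightarrow> 'v list \<Rightarrow> bool" where
  "is_cycle V E cs \<longleftrightarrow> length cs \<ge> 3 \<and> distinct cs \<and> set cs \<subseteq> V
     \<and> (\<forall>i. Suc i < length cs \<longrightarrow> E (cs ! i) (cs ! Suc i))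
     \<and> E (last cs) (hd cs)"

definition is_tree :: "'v set \<Rightarrow> ('v \<Rightarrow> 'v \<Rightarrow> bool) \<Rightarrow> bool" where
  "is_tree V E \<longleftrightarrow> V \<noteq> {}
     \<and> (\<forall>u\<in>V. \<forall>v\<in>V. (\<lambda>a b. a \<in> V \<and> b \<in> V \<and> E a b)\<^sup>*\<^sup>* u v)
     \<and> (\<nexists>cs. is_cycle V E cs)"

text \<open>Extension graph E_1(w): bipartite on left extensions (Inl) and right extensions (Inr).\<close>

definition left_ext :: "(int \<Rightarrow> 'a) set \<Rightarrow> 'a list \<Rightarrow> 'a set" where
  "left_ext X w = {a. a # w \<in> lang X}"

definition right_ext :: "(int \<Rightarrow> 'a) set \<Rightarrow> 'a list \<Rightarrow> 'a set" where
  "right_ext X w = {b. w @ [b] \<in> lang X}"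

definition ext_vertices :: "(int \<Rightarrow> 'a) set \<Rightarrow> 'a list \<Rightarrow> ('a + 'a) set" where
  "ext_vertices X w = Inl ` left_ext X w \<union> Inr ` right_ext X w"

fun ext_adj :: "(int \<Rightarrow> 'a) set \<Rightarrow> 'a list \<Rightarrow> ('a + 'a) \<Rightarrow> ('a + 'a) \<Rightarrow> bool" where
  "ext_adj X w (Inl a) (Inr b) = (a # w @ [b] \<in> lang X)"
| "ext_adj X w (Inr b) (Inl a) = (a # w @ [b] \<in> lang X)"
| "ext_adj X w _ _ = False"

definition eventually_dendric :: "(int \<Rightarrow> 'a) set \<Rightarrow> bool" where
  "eventually_dendric X \<longleftrightarrow>
     (\<exists>m. \<forall>w\<in>lang X. length w \<ge> m \<longrightarrow> is_tree (ext_vertices X w) (ext_adj X w))"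

definition right_asym :: "(int \<Rightarrow> 'a) \<Rightarrow> (int \<Rightarrow> 'a) \<Rightarrow> bool" where
  "right_asym x y \<longleftrightarrow> (\<exists>i j. \<forall>k::nat. x (i + int k) = y (j + int k))"

definition orbit :: "(int \<Rightarrow> 'a) \<Rightarrow> (int \<Rightarrow> 'a) set" where
  "orbit x = {(\<lambda>k. x (k + n)) | n::int. True}"

definition asym_eqclass :: "(int \<Rightarrow> 'a) set \<Rightarrow> (int \<Rightarrow> 'a) \<Rightarrow> (int \<Rightarrow> 'a) set" where
  "asym_eqclass X x = {y \<in> X. right_asym x y}"

definition orbits_in :: "(int \<Rightarrow> 'a) set \<Rightarrow> (int \<Rightarrow> 'a) set set" where
  "orbits_in C = orbit ` C"

definition asym_classes :: "(int \<Rightarrow> 'a) set \<Rightarrow> (int \<Rightarrow> 'a) set set" where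
  "asym_classes X = {C. \<exists>x\<in>X. C = asym_eqclass X x
       \<and> (\<exists>y\<in>C. \<exists>z\<in>C. orbit y \<noteq> orbit z)}"

definition omega :: "(int \<Rightarrow> 'a) set \<Rightarrow> enat" where
  "omega X = (if finite (asym_classes X) \<and> (\<forall>C\<in>asym_classes X. finite (orbits_in C))
              then enat (\<Sum>C\<in>asym_classes X. card (orbits_in C) - 1)
              else \<infinity>)"

end

theory Submission
  imports Defs
begin


definition pref :: "nat \<Rightarrow> (nat \<Rightarrow> 'a) \<Rightarrow> 'a list" where
  "pref n u = map u [0..<n]"
definition ray :: "(int \<Rightarrow> 'a) \<Rightarrow> int \<Rightarrow> nat \<Rightarrow> 'a" where
  "ray x t = (\<lambda>k. x (t + int k))"
definition sh :: "int \<Rightarrow> (int \<Rightarrow> 'a) \<Rightarrow> int \<Rightarrow> 'a" where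
  "sh n x = (\<lambda>k. x (k + n))"
definition isray :: "(int \<Rightarrow> 'a) set \<Rightarrow> (nat \<Rightarrow> 'a) \<Rightarrow> bool" where
  "isray X u \<longleftrightarrow> (\<forall>n. pref n u \<in> lang X)"
definition lext :: "(int \<Rightarrow> 'a) set \<Rightarrow> (nat \<Rightarrow> 'a) \<Rightarrow> 'a set" where
  "lext X u = {a. \<forall>n. a # pref n u \<in> lang X}"
definition Bset :: "(int \<Rightarrow> 'a) set \<Rightarrow> (nat \<Rightarrow> 'a) set" where
  "Bset X = {u. isray X u \<and> 2 \<le> card (lext X u)}"
definition cns :: "'a \<Rightarrow> (nat \<Rightarrow> 'a) \<Rightarrow> nat \<Rightarrow> 'a" where
  "cns a u = (\<lambda>k. case k of 0 \<Rightarrow> a | Suc j \<Rightarrow> u j)"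
definition sig :: "nat \<Rightarrow> (nat \<Rightarrow> 'a) \<Rightarrow> nat \<Rightarrow> 'a" where
  "sig j u = (\<lambda>k. u (k + j))"

lemma length_factor_at[simp]: "length (factor_at x i n) = n"
  by (simp add: factor_at_def)

lemma nth_factor_at[simp]: "k < n \<Longrightarrow> factor_at x i n ! k = x (i + int k)"
  by (simp add: factor_at_def)

lemma factor_at_sh: "factor_at (sh n x) i m = factor_at x (i + n) m"
  by (simp add: factor_at_def sh_def algebra_simps)

lemma factor_at_add: "factor_at x i (m + k) = factor_at x i m @ factor_at x (i + int m) k"
  by (rule nth_equalityI) (auto simp: nth_append algebra_simps)

lemma factor_at_Suc_left: "factor_at x (i - 1) (Suc n) = x (i - 1) # factor_at x i n"
  by (rule nth_equalityI) (auto simp: nth_Cons' algebra_simps)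

lemma factor_at_Suc_right: "factor_at x i (Suc n) = factor_at x i n @ [x (i + int n)]"
  using factor_at_add[of x i n 1] by (simp add: factor_at_def)

lemma sh_sh[simp]: "sh m (sh n x) = sh (n + m) x"
  by (simp add: sh_def algebra_simps)

lemma sh_0[simp]: "sh 0 x = x"
  by (simp add: sh_def)

lemma sh_in:
  assumes ss: "is_shift_space X" and x: "x \<in> X"
  shows "sh n x \<in> X"
proof -
  have up: "\<And>y. y \<in> X \<Longrightarrow> sh 1 y \<in> X"
  proof -
    fix y assume "y \<in> X"
    hence "shift y \<in> X" using ss unfolding is_shift_space_def by blast
    thus "sh 1 y \<in> X" by (simp add: shift_def sh_def)
  qed
  have down: "\<And>y. y \<in> X \<Longrightarrow> sh (-1) y \<in> X"
  proof -
    fix y assume "y \<in> X"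
    then obtain z where z: "z \<in> X" "shift z = y" using ss unfolding is_shift_space_def by force
    have "sh (-1) y = z" using z(2) by (auto simp: shift_def sh_def)
    thus "sh (-1) y \<in> X" using z by simp
  qed
  have pos: "\<And>m::nat. sh (int m) x \<in> X"
  proof -
    fix m::nat show "sh (int m) x \<in> X"
    proof (induction m)
      case 0 then show ?case using x by simp
    next
      case (Suc m)
      from up[OF Suc] show ?case by (simp add: add.commute)
    qed
  qed
  have neg: "\<And>m::nat. sh (- int m) x \<in> X"
  proof -
    fix m::nat show "sh (- int m) x \<in> X"
    proof (induction m)
      case 0 then show ?case using x by simp
    next
      case (Suc m)
      have "- int (Suc m) = - int m + (- 1)" by simp
      then show ?case using down[OF Suc] by (simp only: sh_sh[symmetric])
    qed
  qed
  show ?thesis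
  proof (cases "n \<ge> 0")
    case True
    then show ?thesis using pos[of "nat n"] by simp
  next
    case False
    then show ?thesis using neg[of "nat (-n)"] by simp
  qed
qed

lemma lang_iff:
  assumes ss: "is_shift_space X"
  shows "w \<in> lang X \<longleftrightarrow> (\<exists>x\<in>X. w = factor_at x 0 (length w))"
proof
  assume "w \<in> lang X"
  then obtain x i where "x \<in> X" "w = factor_at x i (length w)" by (auto simp: lang_def)
  thus "\<exists>x\<in>X. w = factor_at x 0 (length w)"
    by (intro bexI[of _ "sh i x"]) (auto simp: factor_at_sh sh_in[OF ss])
qed (auto simp: lang_def)

lemma lang_factor: "x \<in> X \<Longrightarrow> factor_at x i n \<in> lang X"
  by (auto simp: lang_def)

lemma lang_infix:
  assumes "u @ v @ w \<in> lang X"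
  shows "v \<in> lang X"
proof -
  obtain x i where x: "x \<in> X" and e: "u @ v @ w = factor_at x i (length (u @ v @ w))"
    using assms by (auto simp: lang_def)
  have "factor_at x i (length (u @ v @ w)) = factor_at x i (length u) @ factor_at x (i + int (length u)) (length v)
       @ factor_at x (i + int (length u) + int (length v)) (length w)"
    by (simp add: factor_at_add add.assoc)
  with e have "u @ (v @ w) = factor_at x i (length u) @ (factor_at x (i + int (length u)) (length v)
       @ factor_at x (i + int (length u) + int (length v)) (length w))" by simp
  hence "v @ w = factor_at x (i + int (length u)) (length v)
       @ factor_at x (i + int (length u) + int (length v)) (length w)"
    by (subst (asm) append_eq_append_conv) auto
  hence "v = factor_at x (i + int (length u)) (length v)"
    by (subst (asm) append_eq_append_conv) auto
  thus ?thesis using x by (auto simp: lang_def)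
qed

lemma lang_prefix: "u @ v \<in> lang X \<Longrightarrow> u \<in> lang X"
  using lang_infix[of "[]" u v] by simp

lemma lang_suffix: "u @ v \<in> lang X \<Longrightarrow> v \<in> lang X"
  using lang_infix[of u v "[]"] by simp

lemma lang_take: "w \<in> lang X \<Longrightarrow> take n w \<in> lang X"
  by (metis append_take_drop_id lang_prefix)

lemma lang_drop: "w \<in> lang X \<Longrightarrow> drop n w \<in> lang X"
  by (metis append_take_drop_id lang_suffix)

lemma lang_ext_left:
  assumes "w \<in> lang X" shows "\<exists>a. a # w \<in> lang X"
proof -
  obtain x i where x: "x \<in> X" and e: "w = factor_at x i (length w)"
    using assms by (auto simp: lang_def)
  have "x (i - 1) # w = factor_at x (i - 1) (length (x (i - 1) # w))"
    using e factor_at_Suc_left[of x i "length w"] by simp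
  thus ?thesis using x by (auto simp: lang_def)
qed

lemma lang_ext_right:
  assumes "w \<in> lang X" shows "\<exists>b. w @ [b] \<in> lang X"
proof -
  obtain x i where x: "x \<in> X" and e: "w = factor_at x i (length w)"
    using assms by (auto simp: lang_def)
  have "w @ [x (i + int (length w))] = factor_at x i (length (w @ [x (i + int (length w))]))"
    using e factor_at_Suc_right[of x i "length w"] by simp
  thus ?thesis using x by (auto simp: lang_def)
qed

lemma finite_lang_n: "finite (lang_n X (n::nat) :: ('a::finite) list set)"
proof -
  have "lang_n X n \<subseteq> {xs. set xs \<subseteq> UNIV \<and> length xs = n}" by (auto simp: lang_n_def)
  moreover have "finite {xs. set xs \<subseteq> (UNIV::'a set) \<and> length xs = n}"
    by (rule finite_lists_length_eq) simp
  ultimately show ?thesis by (rule finite_subset)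
qed

lemma K1:
  fixes X :: "(int \<Rightarrow> 'a::finite) set"
  assumes ss: "is_shift_space X" and g: "\<And>i n. factor_at g i n \<in> lang X"
  shows "g \<in> X"
proof (rule ccontr)
  assume gX: "g \<notin> X"
  let ?T = "product_topology (\<lambda>_::int. discrete_topology (UNIV::'a set)) UNIV"
  have "closedin ?T X" using ss by (simp add: is_shift_space_def)
  hence op: "openin ?T (topspace ?T - X)" by (simp add: closedin_def)
  have "g \<in> topspace ?T - X" using gX by simp
  then have "\<exists>U. finite {i \<in> UNIV. U i \<noteq> topspace (discrete_topology UNIV)} \<and>
      (\<forall>i \<in> UNIV. openin (discrete_topology UNIV) (U i)) \<and> g \<in> PiE UNIV U \<and> PiE UNIV U \<subseteq> topspace ?T - X"
    using op[unfolded openin_product_topology_alt] by blast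
  then obtain U where Uf: "finite {i. U i \<noteq> UNIV}" and gU: "g \<in> PiE UNIV U"
      and sub: "PiE UNIV U \<subseteq> topspace ?T - X"
    by auto
  define S where "S = {i. U i \<noteq> UNIV}"
  define n where "n = nat (\<Sum>i\<in>S. \<bar>i\<bar>)"
  have nb: "\<bar>i\<bar> \<le> int n" if "U i \<noteq> UNIV" for i
  proof -
    have "i \<in> S" using that by (simp add: S_def)
    hence "\<bar>i\<bar> \<le> (\<Sum>i\<in>S. \<bar>i\<bar>)" using Uf by (intro member_le_sum) (auto simp: S_def)
    thus ?thesis by (simp add: n_def)
  qed
  have "factor_at g (- int n) (2*n+1) \<in> lang X" by (rule g)
  then obtain x j where xX: "x \<in> X" and eq: "factor_at g (-int n) (2*n+1) = factor_at x j (2*n+1)"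
    by (auto simp: lang_def)
  define y where "y = sh (j + int n) x"
  have yX: "y \<in> X" using sh_in[OF ss xX] by (simp add: y_def)
  have yg: "y i = g i" if "\<bar>i\<bar> \<le> int n" for i
  proof -
    define k where "k = nat (i + int n)"
    have k: "k < 2*n+1" "int k = i + int n" using that by (auto simp: k_def)
    have "factor_at g (-int n) (2*n+1) ! k = factor_at x j (2*n+1) ! k" using eq by simp
    hence "g (- int n + int k) = x (j + int k)" using k by simp
    thus ?thesis using k by (simp add: y_def sh_def algebra_simps)
  qed
  have "y \<in> PiE UNIV U"
  proof -
    have "y i \<in> U i" for i
    proof (cases "U i = UNIV")
      case False
      then have "y i = g i" using yg nb by blast
      moreover have "g i \<in> U i" using gU by (auto simp: PiE_def Pi_def)
      ultimately show ?thesis by simp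
    qed simp
    thus ?thesis by (auto simp: PiE_def Pi_def)
  qed
  with sub yX show False by auto
qed



lemma length_pref[simp]: "length (pref n u) = n" by (simp add: pref_def)
lemma nth_pref[simp]: "k < n \<Longrightarrow> pref n u ! k = u k" by (simp add: pref_def)
lemma pref_Suc: "pref (Suc n) u = pref n u @ [u n]" by (simp add: pref_def)
lemma pref_0[simp]: "pref 0 u = []" by (simp add: pref_def)
lemma pref_cns: "pref (Suc n) (cns a u) = a # pref n u"
  by (rule nth_equalityI) (auto simp: cns_def nth_Cons' split: nat.splits)
lemma take_pref: "m \<le> n \<Longrightarrow> take m (pref n u) = pref m u"
  by (rule nth_equalityI) auto
lemma pref_ray: "pref n (ray x t) = factor_at x t n"
  by (rule nth_equalityI) (auto simp: ray_def)
lemma ray_sh: "ray (sh n x) t = ray x (t + n)"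
  by (auto simp: ray_def sh_def algebra_simps)
lemma sig_ray: "sig j (ray x t) = ray x (t + int j)"
  by (auto simp: ray_def sig_def algebra_simps)
lemma ray_pred: "ray x (t - 1) = cns (x (t - 1)) (ray x t)"
  by (auto simp: ray_def cns_def algebra_simps split: nat.splits)
lemma ray_eq_iff: "ray x t = ray y s \<longleftrightarrow> (\<forall>k::nat. x (t + int k) = y (s + int k))"
  by (auto simp: ray_def fun_eq_iff)
lemma sig_sig[simp]: "sig i (sig j u) = sig (i + j) u"
  by (auto simp: sig_def algebra_simps)
lemma sig_0[simp]: "sig 0 u = u" by (simp add: sig_def)
lemma sig_cns: "sig (Suc j) (cns a u) = sig j u"
  by (auto simp: sig_def cns_def)
lemma cns_sig: "cns (u j) (sig (Suc j) u) = sig j u"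
  by (auto simp: sig_def cns_def fun_eq_iff split: nat.splits)

lemma isray_ray: "x \<in> X \<Longrightarrow> isray X (ray x t)"
  by (simp add: isray_def pref_ray lang_factor)

lemma lext_ray: "x \<in> X \<Longrightarrow> x (t - 1) \<in> lext X (ray x t)"
proof -
  assume x: "x \<in> X"
  have "x (t - 1) # pref n (ray x t) \<in> lang X" for n
    using factor_at_Suc_left[of x t n] lang_factor[OF x, of "t - 1" "Suc n"] by (simp add: pref_ray)
  thus ?thesis by (simp add: lext_def)
qed

lemma isray_sig: "isray X u \<Longrightarrow> isray X (sig j u)"
proof -
  assume u: "isray X u"
  have "pref n (sig j u) = drop j (pref (j + n) u)" for n
    by (rule nth_equalityI) (auto simp: sig_def algebra_simps)
  thus ?thesis using u by (simp add: isray_def lang_drop)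
qed

lemma lext_sig: "isray X u \<Longrightarrow> u j \<in> lext X (sig (Suc j) u)"
proof -
  assume u: "isray X u"
  have "u j # pref n (sig (Suc j) u) = drop j (pref (Suc j + n) u)" for n
    by (rule nth_equalityI) (auto simp: sig_def nth_Cons' algebra_simps)
  thus ?thesis using u by (simp add: isray_def lext_def lang_drop)
qed

lemma isray_cns: "a \<in> lext X u \<Longrightarrow> isray X (cns a u)"
proof -
  assume a: "a \<in> lext X u"
  have "pref n (cns a u) \<in> lang X" for n
  proof (cases n)
    case 0
    have "a # pref 0 u \<in> lang X" using a unfolding lext_def by blast
    hence "[a] \<in> lang X" by simp
    then show ?thesis using 0 lang_take[of "[a]" X 0] by simp
  next
    case (Suc m)
    then show ?thesis using a by (simp add: pref_cns lext_def)
  qed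
  thus ?thesis by (simp add: isray_def)
qed

lemma lext_sub: "lext X u \<subseteq> left_ext X (pref n u)"
  by (auto simp: lext_def left_ext_def)

lemma left_ext_pref_mono:
  assumes "m \<le> n" shows "left_ext X (pref n u) \<subseteq> left_ext X (pref m u)"
proof
  fix a assume "a \<in> left_ext X (pref n u)"
  hence "a # pref n u \<in> lang X" by (simp add: left_ext_def)
  hence "take (Suc m) (a # pref n u) \<in> lang X" by (rule lang_take)
  thus "a \<in> left_ext X (pref m u)" using assms by (simp add: take_pref left_ext_def)
qed

lemma K5:
  fixes X :: "(int \<Rightarrow> 'a::finite) set"
  shows "\<exists>N. \<forall>n\<ge>N. left_ext X (pref n u) = lext X u"
proof -
  define S where "S = - lext X u"
  have "\<forall>a\<in>S. \<exists>n. a # pref n u \<notin> lang X" by (auto simp: S_def lext_def)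
  then obtain na where na: "\<And>a. a \<in> S \<Longrightarrow> a # pref (na a) u \<notin> lang X" by metis
  define N where "N = Max (na ` S)"
  have "left_ext X (pref n u) = lext X u" if "n \<ge> N" for n
  proof
    show "left_ext X (pref n u) \<subseteq> lext X u"
    proof
      fix a assume a: "a \<in> left_ext X (pref n u)"
      show "a \<in> lext X u"
      proof (rule ccontr)
        assume "a \<notin> lext X u"
        hence aS: "a \<in> S" by (simp add: S_def)
        hence "na a \<le> N" unfolding N_def by (intro Max_ge) auto
        hence "a \<in> left_ext X (pref (na a) u)" using left_ext_pref_mono[of "na a" n X u] a that by auto
        thus False using na[OF aS] by (simp add: left_ext_def)
      qed
    qed
  qed (rule lext_sub)
  thus ?thesis by blast
qed

lemma lext_ne:
  fixes X :: "(int \<Rightarrow> 'a::finite) set"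
  assumes u: "isray X u" shows "lext X u \<noteq> {}"
proof -
  obtain N where N: "\<And>n. n \<ge> N \<Longrightarrow> left_ext X (pref n u) = lext X u" using K5 by blast
  obtain a where "a # pref N u \<in> lang X" using u lang_ext_left by (metis isray_def)
  thus ?thesis using N[of N] by (auto simp: left_ext_def)
qed

lemma K2:
  fixes X :: "(int \<Rightarrow> 'a::finite) set"
  assumes ss: "is_shift_space X" and v: "isray X v"
  shows "\<exists>x\<in>X. ray x 0 = v"
proof -
  define vs where "vs = rec_nat v (\<lambda>k w. cns (SOME a. a \<in> lext X w) w)"
  have vs0: "vs 0 = v" and vsS: "\<And>k. vs (Suc k) = cns (SOME a. a \<in> lext X (vs k)) (vs k)"
    by (simp_all add: vs_def)
  have isr: "isray X (vs k)" for k
  proof (induction k)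
    case 0 then show ?case using v vs0 by simp
  next
    case (Suc k)
    have "(SOME a. a \<in> lext X (vs k)) \<in> lext X (vs k)"
      using lext_ne[OF Suc] by (simp add: some_in_eq)
    then show ?case by (simp add: vsS isray_cns)
  qed
  have rel: "vs (k + m) (j + m) = vs k j" for k m j
    by (induction m) (auto simp: vsS cns_def)
  define x where "x = (\<lambda>i::int. if 0 \<le> i then v (nat i) else vs (nat (-i)) 0)"
  have xk: "x i = vs k (nat (i + int k))" if "0 \<le> i + int k" for i k
  proof (cases "0 \<le> i")
    case True
    have "vs (0 + k) (nat i + k) = vs 0 (nat i)" by (rule rel)
    moreover have "nat (i + int k) = nat i + k" using True by simp
    ultimately show ?thesis using True by (simp add: x_def vs0)
  next
    case False
    define a where "a = nat (-i)"
    have ak: "a \<le> k" "k = a + (k - a)" "nat (i + int k) = 0 + (k - a)" using False that by (auto simp: a_def)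
    have "vs (a + (k - a)) (0 + (k - a)) = vs a 0" by (rule rel)
    then show ?thesis using False ak by (simp add: x_def a_def)
  qed
  have fac: "factor_at x i n \<in> lang X" for i n
  proof -
    define k where "k = nat (-i)"
    define s where "s = nat (i + int k)"
    have "factor_at x i n = drop s (pref (s + n) (vs k))"
    proof (rule nth_equalityI)
      fix j assume "j < length (factor_at x i n)"
      hence j: "j < n" by simp
      have "0 \<le> i + int j + int k" by (simp add: k_def)
      hence "x (i + int j) = vs k (nat (i + int j + int k))" using xk by simp
      moreover have "nat (i + int j + int k) = s + j" by (auto simp: s_def k_def nat_add_distrib)
      ultimately show "factor_at x i n ! j = drop s (pref (s + n) (vs k)) ! j" using j by simp
    qed simp
    thus ?thesis using isr[of k] lang_drop by (auto simp: isray_def)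
  qed
  have "x \<in> X" by (rule K1[OF ss fac])
  moreover have "ray x 0 = v" by (auto simp: ray_def x_def)
  ultimately show ?thesis by blast
qed

lemma K3:
  fixes X :: "(int \<Rightarrow> 'a::finite) set"
  assumes ss: "is_shift_space X" and a: "a \<in> lext X u"
  shows "\<exists>y\<in>X. ray y 0 = u \<and> y (-1) = a"
proof -
  obtain x where x: "x \<in> X" "ray x 0 = cns a u" using K2[OF ss isray_cns[OF a]] by blast
  have "ray (sh 1 x) 0 = u"
  proof
    fix k show "ray (sh 1 x) 0 k = u k"
      using fun_cong[OF x(2), of "Suc k"] by (simp add: ray_def sh_def cns_def add.commute)
  qed
  moreover have "sh 1 x (-1) = a" using fun_cong[OF x(2), of 0] by (simp add: ray_def sh_def cns_def)
  ultimately show ?thesis using sh_in[OF ss x(1)] by blast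
qed

lemma per_mult:
  assumes "\<And>i. z (i + p) = z i"
  shows "z (i + int q * p) = z i"
proof (induction q)
  case (Suc q)
  have "z (i + int (Suc q) * p) = z ((i + int q * p) + p)" by (simp add: algebra_simps)
  also have "\<dots> = z i" using assms Suc by simp
  finally show ?case .
qed simp

lemma K6:
  fixes X :: "(int \<Rightarrow> 'a::finite) set"
  assumes ss: "is_shift_space X" and x: "x \<in> X" and eq: "ray x t1 = ray x t2" and lt: "t1 < t2"
  shows "\<exists>z\<in>X. (\<exists>p>0. \<forall>i. z (i + p) = z i) \<and> ray z t1 = ray x t1"
proof -
  define p where "p = t2 - t1"
  have p: "p > 0" using lt by (simp add: p_def)
  have xp: "x (t1 + int k + p) = x (t1 + int k)" for k
    using eq by (auto simp: ray_eq_iff p_def algebra_simps)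
  have xpq: "x (t1 + int k + int q * p) = x (t1 + int k)" for k q
  proof (induction q)
    case (Suc q)
    have "t1 + int k + int q * p \<ge> t1" using p by simp
    then obtain k' where k': "t1 + int k + int q * p = t1 + int k'" by (metis le_add_diff_inverse zle_iff_zadd)
    have "x (t1 + int k + int (Suc q) * p) = x ((t1 + int k + int q * p) + p)" by (simp add: algebra_simps)
    also have "\<dots> = x (t1 + int k + int q * p)" unfolding k' by (rule xp)
    finally show ?case using Suc by simp
  qed simp
  define z where "z = (\<lambda>i. x (t1 + (i - t1) mod p))"
  have zper: "z (i + p) = z i" for i
  proof -
    have e: "i + p - t1 = (i - t1) + p" by simp
    have "(i + p - t1) mod p = (i - t1) mod p" by (simp only: e mod_add_self2)
    thus ?thesis by (simp add: z_def)
  qed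
  have zx: "z i = x i" if "i \<ge> t1" for i
  proof -
    define q where "q = nat ((i - t1) div p)"
    define k where "k = nat ((i - t1) mod p)"
    have "(i - t1) div p \<ge> 0" using that p by (simp add: div_int_pos_iff)
    moreover have "(i - t1) mod p \<ge> 0" using p by simp
    ultimately have "i = t1 + int k + int q * p"
      by (simp add: q_def k_def)
    hence "x i = x (t1 + int k)" using xpq by simp
    thus ?thesis using p by (simp add: z_def k_def)
  qed
  have fac: "factor_at z i n \<in> lang X" for i n
  proof -
    define q where "q = nat (t1 - i)"
    have "int q * 1 \<le> int q * p" using p by (intro mult_left_mono) auto
    hence ge: "i + int q * p \<ge> t1" by (simp add: q_def split: if_splits)
    have "factor_at z i n = factor_at x (i + int q * p) n"
    proof (rule nth_equalityI)
      fix j assume "j < length (factor_at z i n)"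
      hence j: "j < n" by simp
      have "z (i + int j) = z (i + int j + int q * p)" using per_mult[of z p, OF zper] by simp
      also have "\<dots> = x (i + int j + int q * p)" using ge by (intro zx) simp
      finally show "factor_at z i n ! j = factor_at x (i + int q * p) n ! j" using j by (simp add: algebra_simps)
    qed simp
    thus ?thesis using lang_factor[OF x] by simp
  qed
  have "z \<in> X" by (rule K1[OF ss fac])
  moreover have "ray z t1 = ray x t1" by (auto simp: ray_eq_iff zx)
  ultimately show ?thesis using p zper by blast
qed



definition lsum :: "(int \<Rightarrow> 'a) set \<Rightarrow> nat \<Rightarrow> nat" where
  "lsum X n = (\<Sum>w\<in>lang_n X n. card (left_ext X w) - 1)"

lemma left_ext_ne: "w \<in> lang X \<Longrightarrow> left_ext X w \<noteq> {}"
  using lang_ext_left by (fastforce simp: left_ext_def)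

lemma right_ext_ne: "w \<in> lang X \<Longrightarrow> right_ext X w \<noteq> {}"
  using lang_ext_right by (fastforce simp: right_ext_def)

lemma lang_n_Suc_left:
  "lang_n X (Suc n) = (\<lambda>(w,a). a # w) ` (SIGMA w:lang_n X n. left_ext X w)"
proof (intro set_eqI iffI)
  fix v assume v: "v \<in> lang_n X (Suc n)"
  then obtain a w where vw: "v = a # w" by (cases v) (auto simp: lang_n_def)
  have "w \<in> lang X" using v vw lang_suffix[of "[a]" w X] by (simp add: lang_n_def)
  thus "v \<in> (\<lambda>(w,a). a # w) ` (SIGMA w:lang_n X n. left_ext X w)"
    using v vw by (auto simp: lang_n_def left_ext_def image_iff)
qed (auto simp: lang_n_def left_ext_def)

lemma lang_n_Suc_right:
  "lang_n X (Suc n) = (\<lambda>(w,b). w @ [b]) ` (SIGMA w:lang_n X n. right_ext X w)"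
proof (intro set_eqI iffI)
  fix v assume v: "v \<in> lang_n X (Suc n)"
  then obtain b w where vw: "v = w @ [b]" by (cases v rule: rev_cases) (auto simp: lang_n_def)
  have "w \<in> lang X" using v vw lang_prefix[of w "[b]" X] by (simp add: lang_n_def)
  thus "v \<in> (\<lambda>(w,b). w @ [b]) ` (SIGMA w:lang_n X n. right_ext X w)"
    using v vw by (auto simp: lang_n_def right_ext_def image_iff)
qed (auto simp: lang_n_def right_ext_def)

lemma p_Suc:
  fixes X :: "(int \<Rightarrow> 'a::finite) set"
  shows "p_cplx X (Suc n) = (\<Sum>w\<in>lang_n X n. card (left_ext X w))"
proof -
  have "inj_on (\<lambda>(w,a). a # w) (SIGMA w:lang_n X n. left_ext X w)" by (auto simp: inj_on_def)
  hence "card (lang_n X (Suc n)) = card (SIGMA w:lang_n X n. left_ext X w)"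
    by (simp add: lang_n_Suc_left card_image)
  also have "\<dots> = (\<Sum>w\<in>lang_n X n. card (left_ext X w))"
    by (rule card_SigmaI) (auto simp: finite_lang_n)
  finally show ?thesis by (simp add: p_cplx_def)
qed

lemma s_eq:
  fixes X :: "(int \<Rightarrow> 'a::finite) set"
  shows "s_cplx X n = int (lsum X n)"
proof -
  have ge: "card (left_ext X w) \<ge> 1" if "w \<in> lang_n X n" for w
    using left_ext_ne[of w X] that by (auto simp: lang_n_def card_gt_0_iff Suc_le_eq)
  have "int (lsum X n) = (\<Sum>w\<in>lang_n X n. int (card (left_ext X w)) - 1)"
    unfolding lsum_def of_nat_sum using ge by (intro sum.cong) (auto simp: of_nat_diff)
  also have "\<dots> = int (p_cplx X (Suc n)) - int (p_cplx X n)"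
    using p_Suc[of X n, unfolded p_cplx_def] by (simp add: sum_subtractf p_cplx_def)
  finally show ?thesis by (simp add: s_cplx_def)
qed

lemma lsum_Suc:
  fixes X :: "(int \<Rightarrow> 'a::finite) set"
  shows "lsum X (Suc n) = (\<Sum>w\<in>lang_n X n. \<Sum>b\<in>right_ext X w. card (left_ext X (w @ [b])) - 1)"
proof -
  have inj: "inj_on (\<lambda>(w,b). w @ [b]) (SIGMA w:lang_n X n. right_ext X w)" by (auto simp: inj_on_def)
  have "lsum X (Suc n) = (\<Sum>p\<in>(SIGMA w:lang_n X n. right_ext X w). card (left_ext X (fst p @ [snd p])) - 1)"
    unfolding lsum_def lang_n_Suc_right by (subst sum.reindex[OF inj]) (auto intro!: sum.cong)
  also have "\<dots> = (\<Sum>w\<in>lang_n X n. \<Sum>b\<in>right_ext X w. card (left_ext X (w @ [b])) - 1)"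
    by (subst sum.Sigma) (auto simp: finite_lang_n split_def)
  finally show ?thesis .
qed

lemma P1:
  fixes X :: "(int \<Rightarrow> 'a::finite) set"
  assumes F: "finite F"
  shows "\<exists>N. \<forall>n\<ge>N. inj_on (\<lambda>u. pref n u) F \<and> (\<forall>u\<in>F. left_ext X (pref n u) = lext X u)"
proof -
  have e1: "eventually (\<lambda>n. \<forall>u\<in>F. left_ext X (pref n u) = lext X u) sequentially"
    using F by (intro eventually_ball_finite) (auto simp: eventually_sequentially intro: K5)
  have e2: "eventually (\<lambda>n. \<forall>u\<in>F. \<forall>v\<in>F. u \<noteq> v \<longrightarrow> pref n u \<noteq> pref n v) sequentially"
  proof (intro eventually_ball_finite F ballI)
    fix u v assume "u \<in> F" "v \<in> F"
    show "eventually (\<lambda>n. u \<noteq> v \<longrightarrow> pref n u \<noteq> pref n v) sequentially"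
    proof (cases "u = v")
      case False
      then obtain k where k: "u k \<noteq> v k" by auto
      have "pref n u \<noteq> pref n v" if "n \<ge> Suc k" for n
      proof
        assume "pref n u = pref n v"
        hence "pref n u ! k = pref n v ! k" by simp
        thus False using k that by simp
      qed
      thus ?thesis by (auto simp: eventually_sequentially)
    qed simp
  qed
  from eventually_conj[OF e1 e2] obtain N where
    "\<And>n. n \<ge> N \<Longrightarrow> (\<forall>u\<in>F. left_ext X (pref n u) = lext X u) \<and>
        (\<forall>u\<in>F. \<forall>v\<in>F. u \<noteq> v \<longrightarrow> pref n u \<noteq> pref n v)"
    by (auto simp: eventually_sequentially)
  thus ?thesis by (auto simp: inj_on_def) blast
qed

lemma lsum_decomp:
  fixes X :: "(int \<Rightarrow> 'a::finite) set"
  assumes F: "finite F" and Fr: "\<And>u. u \<in> F \<Longrightarrow> isray X u"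
    and inj: "inj_on (\<lambda>u. pref n u) F" and st: "\<And>u. u \<in> F \<Longrightarrow> left_ext X (pref n u) = lext X u"
  shows "lsum X n = (\<Sum>u\<in>F. card (lext X u) - 1)
          + (\<Sum>w\<in>lang_n X n - (\<lambda>u. pref n u) ` F. card (left_ext X w) - 1)"
proof -
  have sub: "(\<lambda>u. pref n u) ` F \<subseteq> lang_n X n" using Fr by (auto simp: isray_def lang_n_def)
  have "lsum X n = (\<Sum>w\<in>(\<lambda>u. pref n u) ` F. card (left_ext X w) - 1)
          + (\<Sum>w\<in>lang_n X n - (\<lambda>u. pref n u) ` F. card (left_ext X w) - 1)"
    unfolding lsum_def by (subst sum.subset_diff[OF sub finite_lang_n]) (simp add: add.commute)
  also have "(\<Sum>w\<in>(\<lambda>u. pref n u) ` F. card (left_ext X w) - 1) = (\<Sum>u\<in>F. card (lext X u) - 1)"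
    by (subst sum.reindex[OF inj]) (auto simp: st)
  finally show ?thesis .
qed

lemma lext_card_ge1: "isray X u \<Longrightarrow> card (lext X (u::nat\<Rightarrow>'a::finite)) \<ge> 1"
  using lext_ne[of X u] by (simp add: Suc_le_eq card_gt_0_iff)

lemma P3:
  fixes X :: "(int \<Rightarrow> 'a::finite) set"
  assumes c: "\<And>n. n \<ge> N \<Longrightarrow> lsum X n = c"
  shows "finite (Bset X)" and "(\<Sum>u\<in>Bset X. card (lext X u) - 1) \<le> c"
proof -
  have bound: "(\<Sum>u\<in>F. card (lext X u) - 1) \<le> c" if F: "finite F" "F \<subseteq> Bset X" for F
  proof -
    obtain M where M: "\<And>n. n \<ge> M \<Longrightarrow> inj_on (\<lambda>u. pref n u) F \<and> (\<forall>u\<in>F. left_ext X (pref n u) = lext X u)"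
      using P1[OF F(1)] by blast
    define n where "n = max M N"
    have "lsum X n = (\<Sum>u\<in>F. card (lext X u) - 1)
          + (\<Sum>w\<in>lang_n X n - (\<lambda>u. pref n u) ` F. card (left_ext X w) - 1)"
      using M[of n] F by (intro lsum_decomp) (auto simp: n_def Bset_def)
    moreover have "lsum X n = c" using c by (simp add: n_def)
    ultimately show ?thesis by linarith
  qed
  show fin: "finite (Bset X)"
  proof (rule ccontr)
    assume "infinite (Bset X)"
    then obtain F where F: "finite F" "card F = Suc c" "F \<subseteq> Bset X"
      using infinite_arbitrarily_large by blast
    have "card F = (\<Sum>u\<in>F. 1)" by simp
    also have "\<dots> \<le> (\<Sum>u\<in>F. card (lext X u) - 1)"
      using F(3) by (intro sum_mono) (auto simp: Bset_def)
    also have "\<dots> \<le> c" using bound F by blast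
    finally show False using F(2) by simp
  qed
  show "(\<Sum>u\<in>Bset X. card (lext X u) - 1) \<le> c" using bound[OF fin] by simp
qed



lemma star_tree:
  fixes G :: "('a + 'b) \<Rightarrow> ('a + 'b) \<Rightarrow> bool"
  assumes A: "A \<noteq> {}" and b0: "b0 \<in> R"
    and GLR: "\<And>a b. G (Inl a) (Inr b) = E a b" and GRL: "\<And>a b. G (Inr b) (Inl a) = E a b"
    and GLL: "\<And>a a'. \<not> G (Inl a) (Inl a')" and GRR: "\<And>b b'. \<not> G (Inr b) (Inr b')"
    and Ein: "\<And>a b. E a b \<Longrightarrow> a \<in> A \<and> b \<in> R"
    and all: "\<And>a. a \<in> A \<Longrightarrow> E a b0"
    and uniq: "\<And>b. b \<in> R \<Longrightarrow> b \<noteq> b0 \<Longrightarrow> \<exists>!a. E a b"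
  shows "is_tree (Inl ` A \<union> Inr ` R) G"
proof -
  let ?V = "Inl ` A \<union> Inr ` R"
  let ?R = "\<lambda>a b. a \<in> ?V \<and> b \<in> ?V \<and> G a b"
  have to0: "?R\<^sup>*\<^sup>* v (Inr b0) \<and> ?R\<^sup>*\<^sup>* (Inr b0) v" if v: "v \<in> ?V" for v
  proof (cases v)
    case (Inl a)
    hence a: "a \<in> A" using v by auto
    have "?R v (Inr b0)" "?R (Inr b0) v" using Inl a b0 all GLR GRL by auto
    thus ?thesis by auto
  next
    case (Inr b)
    hence b: "b \<in> R" using v by auto
    show ?thesis
    proof (cases "b = b0")
      case True then show ?thesis using Inr by auto
    next
      case False
      then obtain a where ab: "E a b" using uniq[OF b] by auto
      hence a: "a \<in> A" using Ein by auto
      have r1: "?R v (Inl a)" "?R (Inl a) v" using Inr a b ab GLR GRL by auto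
      have r2: "?R (Inl a) (Inr b0)" "?R (Inr b0) (Inl a)" using a b0 all GLR GRL by auto
      have "?R\<^sup>*\<^sup>* v (Inr b0)" by (rule converse_rtranclp_into_rtranclp[of ?R v "Inl a" "Inr b0", OF r1(1) r_into_rtranclp[of ?R, OF r2(1)]])
      moreover have "?R\<^sup>*\<^sup>* (Inr b0) v" by (rule converse_rtranclp_into_rtranclp[of ?R "Inr b0" "Inl a" v, OF r2(2) r_into_rtranclp[of ?R, OF r1(2)]])
      ultimately show ?thesis by blast
    qed
  qed
  have conn: "\<forall>u\<in>?V. \<forall>v\<in>?V. ?R\<^sup>*\<^sup>* u v"
    using to0 by (meson rtranclp_trans)
  have nocyc: "\<not> is_cycle ?V G cs" for cs
  proof
    assume cyc: "is_cycle ?V G cs"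
    define k where "k = length cs"
    have k3: "k \<ge> 3" and dist: "distinct cs" and sub: "set cs \<subseteq> ?V"
      and cons: "\<And>i. Suc i < k \<Longrightarrow> G (cs ! i) (cs ! Suc i)" and cl: "G (last cs) (hd cs)"
      using cyc by (auto simp: is_cycle_def k_def)
    define nx where "nx i = (if Suc i < k then Suc i else 0)" for i
    define pv where "pv i = (if i = 0 then k - 1 else i - 1)" for i
    have lastk: "last cs = cs ! (k - 1)" and hdk: "hd cs = cs ! 0"
    proof -
      have "cs \<noteq> []" using k3 by (auto simp: k_def)
      thus "last cs = cs ! (k - 1)" "hd cs = cs ! 0" by (auto simp: k_def last_conv_nth hd_conv_nth)
    qed
    have Gnx: "G (cs ! i) (cs ! nx i)" if "i < k" for i
    proof (cases "Suc i < k")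
      case True then show ?thesis using cons by (simp add: nx_def)
    next
      case False
      hence "i = k - 1" using that by simp
      then show ?thesis using False cl lastk hdk by (simp add: nx_def)
    qed
    have Gpv: "G (cs ! pv i) (cs ! i)" if "i < k" for i
    proof (cases "i = 0")
      case True then show ?thesis using cl lastk hdk by (simp add: pv_def)
    next
      case False then show ?thesis using cons[of "i - 1"] that by (simp add: pv_def)
    qed
    have nxk: "nx i < k" and pvk: "pv i < k" if "i < k" for i
      using that k3 by (auto simp: nx_def pv_def)
    have nxpv: "nx i \<noteq> pv i" if "i < k" for i
      using that k3 by (auto simp: nx_def pv_def)
    have dd: "cs ! i = cs ! j \<Longrightarrow> i < k \<Longrightarrow> j < k \<Longrightarrow> i = j" for i j
      using dist by (simp add: k_def nth_eq_iff_index_eq)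
    have noR: "cs ! i \<noteq> Inr b" if i: "i < k" and bb: "b \<noteq> b0" for i b
    proof
      assume ci: "cs ! i = Inr b"
      have "b \<in> R" using sub ci i by (auto simp: k_def dest!: nth_mem)
      obtain a1 where a1: "cs ! pv i = Inl a1" using Gpv[OF i] ci GRR by (cases "cs ! pv i") auto
      obtain a2 where a2: "cs ! nx i = Inl a2" using Gnx[OF i] ci GRR by (cases "cs ! nx i") auto
      have "E a1 b" using Gpv[OF i] ci a1 GLR by simp
      moreover have "E a2 b" using Gnx[OF i] ci a2 GRL by simp
      ultimately have "a1 = a2" using uniq[OF \<open>b \<in> R\<close> bb] by blast
      hence "pv i = nx i" using dd[of "pv i" "nx i"] a1 a2 nxk[OF i] pvk[OF i] by simp
      thus False using nxpv[OF i] by auto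
    qed
    obtain i where i: "i < k" and ia: "\<exists>a. cs ! i = Inl a"
    proof -
      have "G (cs ! 0) (cs ! 1)" using cons[of 0] k3 by simp
      hence "(\<exists>a. cs ! 0 = Inl a) \<or> (\<exists>a. cs ! 1 = Inl a)"
        using GRR by (cases "cs ! 0"; cases "cs ! 1") auto
      moreover have "0 < k" "1 < k" using k3 by auto
      ultimately show ?thesis using that by blast
    qed
    have rb: "cs ! j = Inr b0" if j: "j < k" and G': "G (cs ! i) (cs ! j) \<or> G (cs ! j) (cs ! i)" for j
    proof -
      obtain a where a: "cs ! i = Inl a" using ia by blast
      obtain b where b: "cs ! j = Inr b" using G' a GLL by (cases "cs ! j") auto
      thus ?thesis using noR[OF j] by (cases "b = b0") auto
    qed
    have "cs ! nx i = Inr b0" using rb[OF nxk[OF i]] Gnx[OF i] by blast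
    moreover have "cs ! pv i = Inr b0" using rb[OF pvk[OF i]] Gpv[OF i] by blast
    ultimately have "nx i = pv i" using dd[of "nx i" "pv i"] nxk[OF i] pvk[OF i] by simp
    thus False using nxpv[OF i] by auto
  qed
  show ?thesis unfolding is_tree_def using A conn nocyc by auto
qed

lemma finite_distinct_lists:
  assumes "finite V" shows "finite {xs. distinct xs \<and> set xs \<subseteq> V}"
proof -
  have "{xs. distinct xs \<and> set xs \<subseteq> V} \<subseteq> {xs. set xs \<subseteq> V \<and> length xs \<le> card V}"
    using assms by (auto simp: distinct_card[symmetric] intro: card_mono)
  thus ?thesis using finite_lists_length_le[OF assms] by (rule finite_subset)
qed

lemma leaf_exists:
  assumes fin: "finite V" and nocyc: "\<And>cs. \<not> is_cycle V G cs"
    and sym: "\<And>u v. G u v \<Longrightarrow> G v u" and irr: "\<And>u. \<not> G u u"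
    and e: "u0 \<in> V" "v0 \<in> V" "G u0 v0"
  shows "\<exists>x y. x \<in> V \<and> y \<in> V \<and> G x y \<and> (\<forall>z\<in>V. G x z \<longrightarrow> z = y)"
proof -
  define P where "P = {xs. distinct xs \<and> set xs \<subseteq> V \<and> 2 \<le> length xs \<and>
                        (\<forall>i. Suc i < length xs \<longrightarrow> G (xs ! i) (xs ! Suc i))}"
  have finP: "finite P" using finite_distinct_lists[OF fin]
    by (rule finite_subset[rotated]) (auto simp: P_def)
  have "[u0, v0] \<in> P" using e irr[of u0] by (auto simp: P_def nth_Cons' split: if_splits)
  hence ne: "P \<noteq> {}" by auto
  obtain xs where xs: "xs \<in> P" and mx: "\<And>ys. ys \<in> P \<Longrightarrow> length ys \<le> length xs"
  proof -
    have "finite (length ` P)" "length ` P \<noteq> {}" using finP ne by auto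
    then obtain xs where "xs \<in> P" "length xs = Max (length ` P)" by (metis Max_in imageE)
    thus ?thesis using that \<open>finite (length ` P)\<close> by (metis Max_ge image_eqI)
  qed
  define k where "k = length xs"
  have k2: "k \<ge> 2" and dist: "distinct xs" and sub: "set xs \<subseteq> V"
    and cons: "\<And>i. Suc i < k \<Longrightarrow> G (xs ! i) (xs ! Suc i)" using xs by (auto simp: P_def k_def)
  define x where "x = xs ! (k - 1)"
  define y where "y = xs ! (k - 2)"
  have xV: "x \<in> V" and yV: "y \<in> V" using sub k2 by (auto simp: x_def y_def k_def)
  have Gyx: "G y x" using cons[of "k - 2"] k2 by (simp add: x_def y_def Suc_diff_Suc numeral_2_eq_2)
  have leaf: "z = y" if z: "z \<in> V" "G x z" for z
  proof (cases "z \<in> set xs")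
    case False
    have cz: "G ((xs @ [z]) ! i) ((xs @ [z]) ! Suc i)" if "Suc i < length (xs @ [z])" for i
    proof (cases "Suc i < k")
      case True then show ?thesis using cons by (simp add: nth_append k_def)
    next
      case False
      hence ik: "i = k - 1" using that by (simp add: k_def)
      have lt: "i < length xs" "Suc i = length xs" using ik k2 by (auto simp: k_def)
      have "(xs @ [z]) ! i = x" using ik lt by (simp add: nth_append k_def x_def)
      moreover have "(xs @ [z]) ! Suc i = z" using lt by (simp add: nth_append)
      ultimately show ?thesis using z by simp
    qed
    have "xs @ [z] \<in> P"
      unfolding P_def using xs False z k2 cz by (auto simp: P_def)
    hence "length (xs @ [z]) \<le> length xs" by (rule mx)
    thus ?thesis by simp
  next
    case True
    then obtain j where j: "j < k" "xs ! j = z" by (auto simp: k_def in_set_conv_nth)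
    show ?thesis
    proof (cases "j = k - 2")
      case True then show ?thesis using j by (simp add: y_def)
    next
      case False
      have "j \<noteq> k - 1" using j z irr x_def by auto
      hence jk: "j + 3 \<le> k" using False j by linarith
      have "is_cycle V G (drop j xs)"
      proof -
        have "length (drop j xs) \<ge> 3" using jk by (simp add: k_def)
        moreover have "distinct (drop j xs)" using dist by simp
        moreover have "set (drop j xs) \<subseteq> V" using sub by (meson set_drop_subset subset_trans)
        moreover have "\<forall>i. Suc i < length (drop j xs) \<longrightarrow> G (drop j xs ! i) (drop j xs ! Suc i)"
          using cons jk by (auto simp: k_def)
        moreover have "last (drop j xs) = x" using jk by (simp add: last_drop last_conv_nth k_def x_def)
        moreover have "hd (drop j xs) = z" using j jk by (simp add: hd_drop_conv_nth k_def)
        ultimately show ?thesis using z by (simp add: is_cycle_def)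
      qed
      thus ?thesis using nocyc by blast
    qed
  qed
  show ?thesis using xV yV Gyx sym leaf by blast
qed

lemma tree_card:
  assumes fin: "finite V" and tree: "is_tree V G" and sym: "\<And>u v. G u v \<Longrightarrow> G v u" and irr: "\<And>u. \<not> G u u"
  shows "card {(u,v). u \<in> V \<and> v \<in> V \<and> G u v} = 2 * (card V - 1)"
  using fin tree
proof (induction "card V" arbitrary: V rule: less_induct)
  case less
  note fin = less.prems(1) and tree = less.prems(2)
  have Vne: "V \<noteq> {}" and conn: "\<forall>u\<in>V. \<forall>v\<in>V. (\<lambda>a b. a \<in> V \<and> b \<in> V \<and> G a b)\<^sup>*\<^sup>* u v"
    and nocyc: "\<And>cs. \<not> is_cycle V G cs" using tree by (auto simp: is_tree_def)
  show ?case
  proof (cases "card V = 1")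
    case True
    then obtain x where "V = {x}" using card_1_singletonE by blast
    hence "{(u,v). u \<in> V \<and> v \<in> V \<and> G u v} = {}" using irr by auto
    hence "card {(u,v). u \<in> V \<and> v \<in> V \<and> G u v} = 0" by (simp only: card.empty)
    thus ?thesis using True by simp
  next
    case False
    have "card V > 0" using Vne fin by (simp add: card_gt_0_iff)
    hence c2: "card V \<ge> 2" using False by linarith
    obtain u v where uv: "u \<in> V" "v \<in> V" "u \<noteq> v"
      using c2 by (metis One_nat_def Suc_1 card_le_Suc0_iff_eq not_less_eq_eq fin)
    have "(\<lambda>a b. a \<in> V \<and> b \<in> V \<and> G a b)\<^sup>*\<^sup>* u v" using conn uv by blast
    then obtain u' where e: "u \<in> V" "u' \<in> V" "G u u'" using uv(3)
      by (cases rule: converse_rtranclpE) auto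
    obtain x y where xy: "x \<in> V" "y \<in> V" "G x y" and lf: "\<And>z. z \<in> V \<Longrightarrow> G x z \<Longrightarrow> z = y"
      using leaf_exists[OF fin nocyc sym irr e] by blast
    have yx: "y \<noteq> x" using xy irr by auto
    define V' where "V' = V - {x}"
    let ?R = "\<lambda>a b. a \<in> V \<and> b \<in> V \<and> G a b"
    let ?R' = "\<lambda>a b. a \<in> V' \<and> b \<in> V' \<and> G a b"
    have key: "(v \<noteq> x \<longrightarrow> ?R'\<^sup>*\<^sup>* u v) \<and> (v = x \<longrightarrow> ?R'\<^sup>*\<^sup>* u y)"
      if "?R\<^sup>*\<^sup>* u v" "u \<in> V'" for u v
      using that(1)
    proof (induction rule: rtranclp_induct)
      case base then show ?case using that(2) by (auto simp: V'_def)
    next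
      case (step v v')
      show ?case
      proof (cases "v' = x")
        case True
        hence "v = y" using step(2) sym lf by blast
        then show ?thesis using step True yx by auto
      next
        case False
        show ?thesis
        proof (cases "v = x")
          case True
          hence "v' = y" using step(2) lf by blast
          then show ?thesis using step True False by auto
        next
          case False
          hence "?R'\<^sup>*\<^sup>* u v" using step by auto
          moreover have "?R' v v'" using step(2) False \<open>v' \<noteq> x\<close> by (auto simp: V'_def)
          ultimately have "?R'\<^sup>*\<^sup>* u v'" by (rule rtranclp.rtrancl_into_rtrancl[of ?R'])
          thus ?thesis using \<open>v' \<noteq> x\<close> by simp
        qed
      qed
    qed
    have treeV': "is_tree V' G"
      unfolding is_tree_def
    proof (intro conjI ballI)
      show "V' \<noteq> {}" using xy yx by (auto simp: V'_def)
    next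
      fix a b assume "a \<in> V'" "b \<in> V'"
      have "?R\<^sup>*\<^sup>* a b" using conn \<open>a \<in> V'\<close> \<open>b \<in> V'\<close> by (auto simp: V'_def)
      from key[OF this \<open>a \<in> V'\<close>] show "?R'\<^sup>*\<^sup>* a b" using \<open>b \<in> V'\<close> by (auto simp: V'_def)
    next
      have "is_cycle V' G cs \<Longrightarrow> is_cycle V G cs" for cs by (auto simp: is_cycle_def V'_def)
      thus "\<nexists>cs. is_cycle V' G cs" using nocyc by blast
    qed
    have cV': "card V' < card V" "card V' = card V - 1" using xy fin c2 by (auto simp: V'_def)
    have IH: "card {(u,v). u \<in> V' \<and> v \<in> V' \<and> G u v} = 2 * (card V' - 1)"
      using less.hyps[OF cV'(1)] fin treeV' by (auto simp: V'_def)
    have split: "{(u,v). u \<in> V \<and> v \<in> V \<and> G u v} = insert (x,y) (insert (y,x) {(u,v). u \<in> V' \<and> v \<in> V' \<and> G u v})"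
    proof (intro set_eqI iffI)
      fix p assume "p \<in> {(u,v). u \<in> V \<and> v \<in> V \<and> G u v}"
      then obtain a b where p: "p = (a,b)" "a \<in> V" "b \<in> V" "G a b" by auto
      show "p \<in> insert (x,y) (insert (y,x) {(u,v). u \<in> V' \<and> v \<in> V' \<and> G u v})"
      proof (cases "a = x")
        case True
        then show ?thesis using p lf by auto
      next
        case False
        show ?thesis
        proof (cases "b = x")
          case True
          hence "G x a" using p sym by blast
          hence "a = y" using lf p by blast
          then show ?thesis using p True by auto
        next
          case False
          then show ?thesis using p \<open>a \<noteq> x\<close> by (auto simp: V'_def)
        qed
      qed
    next
      fix p assume "p \<in> insert (x,y) (insert (y,x) {(u,v). u \<in> V' \<and> v \<in> V' \<and> G u v})"
      moreover have "G y x" using xy(3) sym by blast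
      ultimately show "p \<in> {(u,v). u \<in> V \<and> v \<in> V \<and> G u v}" using xy by (auto simp: V'_def)
    qed
    have fin': "finite {(u,v). u \<in> V' \<and> v \<in> V' \<and> G u v}"
      by (rule finite_subset[of _ "V' \<times> V'"]) (auto simp: V'_def fin)
    have "card {(u,v). u \<in> V \<and> v \<in> V \<and> G u v} = 2 + card {(u,v). u \<in> V' \<and> v \<in> V' \<and> G u v}"
      unfolding split using fin' yx by (simp add: V'_def)
    thus ?thesis using IH cV' c2 by simp
  qed
qed



lemma ext_adj_sym: "ext_adj X w u v \<Longrightarrow> ext_adj X w v u"
  by (cases u; cases v) auto

lemma ext_adj_irr: "\<not> ext_adj X w u u"
  by (cases u) auto

lemma ext_count:
  fixes X :: "(int \<Rightarrow> 'a::finite) set"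
  assumes tree: "is_tree (ext_vertices X w) (ext_adj X w)"
  shows "(\<Sum>b\<in>right_ext X w. card (left_ext X (w @ [b]))) = card (left_ext X w) + card (right_ext X w) - 1"
proof -
  let ?A = "left_ext X w" and ?R = "right_ext X w"
  let ?V = "ext_vertices X w"
  define Q where "Q = {(a,b). a # w @ [b] \<in> lang X}"
  have QA: "a \<in> ?A" and QR: "b \<in> ?R" if "(a,b) \<in> Q" for a b
  proof -
    have q: "(a # w) @ [b] \<in> lang X" using that by (simp add: Q_def)
    show "a \<in> ?A" using lang_prefix[OF q] by (simp add: left_ext_def)
    have "[a] @ (w @ [b]) \<in> lang X" using q by simp
    show "b \<in> ?R" using lang_suffix[OF \<open>[a] @ (w @ [b]) \<in> lang X\<close>] by (simp add: right_ext_def)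
  qed
  have finQ: "finite Q" by (rule finite_subset[of _ UNIV]) auto
  have PS: "{(u,v). u \<in> ?V \<and> v \<in> ?V \<and> ext_adj X w u v}
      = (\<lambda>(a,b). (Inl a, Inr b)) ` Q \<union> (\<lambda>(a,b). (Inr b, Inl a)) ` Q"
  proof (intro set_eqI iffI)
    fix p assume "p \<in> {(u,v). u \<in> ?V \<and> v \<in> ?V \<and> ext_adj X w u v}"
    then obtain u v where p: "p = (u,v)" "ext_adj X w u v" by auto
    show "p \<in> (\<lambda>(a,b). (Inl a, Inr b)) ` Q \<union> (\<lambda>(a,b). (Inr b, Inl a)) ` Q"
      using p by (cases u; cases v) (auto simp: Q_def image_iff)
  next
    fix p assume "p \<in> (\<lambda>(a,b). (Inl a, Inr b)) ` Q \<union> (\<lambda>(a,b). (Inr b, Inl a)) ` Q"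
    thus "p \<in> {(u,v). u \<in> ?V \<and> v \<in> ?V \<and> ext_adj X w u v}"
      using QA QR by (auto simp: Q_def ext_vertices_def)
  qed
  have cPS: "card {(u,v). u \<in> ?V \<and> v \<in> ?V \<and> ext_adj X w u v} = 2 * card Q"
    unfolding PS
  proof (subst card_Un_disjoint)
    show "card ((\<lambda>(a,b). (Inl a, Inr b)) ` Q) + card ((\<lambda>(a,b). (Inr b, Inl a)) ` Q) = 2 * card Q"
      by (subst card_image, force simp: inj_on_def)+ simp
  qed (auto simp: finQ)
  have cV: "card ?V = card ?A + card ?R"
  proof -
    have "card (Inl ` ?A \<union> Inr ` ?R :: ('a + 'a) set) = card (Inl ` ?A :: ('a + 'a) set) + card (Inr ` ?R :: ('a + 'a) set)"
      by (rule card_Un_disjoint) auto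
    thus ?thesis by (simp add: ext_vertices_def card_image)
  qed
  have tc: "card {(u,v). u \<in> ?V \<and> v \<in> ?V \<and> ext_adj X w u v} = 2 * (card ?V - 1)"
    by (rule tree_card[OF _ tree ext_adj_sym ext_adj_irr]) simp
  have cQ: "card Q = (\<Sum>b\<in>?R. card (left_ext X (w @ [b])))"
  proof -
    have "Q = (\<lambda>(b,a). (a,b)) ` (SIGMA b:?R. left_ext X (w @ [b]))"
      using QR by (auto simp: Q_def left_ext_def image_iff)
    moreover have "inj_on (\<lambda>(b,a). (a,b)) (SIGMA b:?R. left_ext X (w @ [b]))" by (auto simp: inj_on_def)
    ultimately have "card Q = card (SIGMA b:?R. left_ext X (w @ [b]))" by (simp add: card_image)
    also have "\<dots> = (\<Sum>b\<in>?R. card (left_ext X (w @ [b])))" by (rule card_SigmaI) auto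
    finally show ?thesis .
  qed
  show ?thesis using cPS tc cV cQ by simp
qed



definition per :: "(int \<Rightarrow> 'a) \<Rightarrow> bool" where
  "per x \<longleftrightarrow> (\<exists>p>0. \<forall>i. x (i + p) = x i)"

definition TT :: "(int \<Rightarrow> 'a) set \<Rightarrow> (int \<Rightarrow> 'a) \<Rightarrow> int set" where
  "TT X x = {t. ray x t \<in> Bset X}"

lemma right_asym_ray: "right_asym x y \<longleftrightarrow> (\<exists>t s. ray x t = ray y s)"
  by (simp add: right_asym_def ray_eq_iff)

lemma ray_shift: "ray x t = ray y s \<Longrightarrow> ray x (t + int d) = ray y (s + int d)"
proof -
  assume "ray x t = ray y s"
  hence h: "x (t + int k) = y (s + int k)" for k by (simp add: ray_eq_iff)
  show ?thesis unfolding ray_eq_iff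
  proof
    fix k show "x (t + int d + int k) = y (s + int d + int k)" using h[of "d + k"] by (simp add: algebra_simps)
  qed
qed

lemma ray_shift_any: "ray x t = ray y s \<Longrightarrow> \<exists>t' s'. t' \<ge> t0 \<and> s' \<ge> s0 \<and> ray x t' = ray y s'"
proof -
  assume e: "ray x t = ray y s"
  define d where "d = nat (max (t0 - t) (s0 - s))"
  have "ray x (t + int d) = ray y (s + int d)" using ray_shift[OF e] .
  moreover have "t + int d \<ge> t0" "s + int d \<ge> s0" by (auto simp: d_def)
  ultimately show ?thesis by blast
qed

lemma right_asym_refl: "right_asym x x"
  by (auto simp: right_asym_ray)

lemma right_asym_sym: "right_asym x y \<Longrightarrow> right_asym y x"
  by (metis right_asym_ray)

lemma right_asym_trans:
  assumes "right_asym x y" "right_asym y z" shows "right_asym x z"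
proof -
  obtain t s where e1: "ray x t = ray y s" using assms(1) by (auto simp: right_asym_ray)
  obtain s' r where e2: "ray y s' = ray z r" using assms(2) by (auto simp: right_asym_ray)
  show ?thesis
  proof (cases "s \<le> s'")
    case True
    have "ray x (t + int (nat (s' - s))) = ray y (s + int (nat (s' - s)))" by (rule ray_shift[OF e1])
    also have "s + int (nat (s' - s)) = s'" using True by simp
    finally show ?thesis using e2 by (auto simp: right_asym_ray)
  next
    case False
    have "ray y (s' + int (nat (s - s'))) = ray z (r + int (nat (s - s')))" by (rule ray_shift[OF e2])
    also have "s' + int (nat (s - s')) = s" using False by simp
    finally show ?thesis using e1 by (auto simp: right_asym_ray)
  qed
qed

lemma right_asym_sh: "right_asym x (sh n x)"
proof -
  have "ray x n = ray (sh n x) 0" by (simp add: ray_sh)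
  thus ?thesis by (auto simp: right_asym_ray)
qed

lemma orbit_mem: "sh m x \<in> orbit x"
  unfolding orbit_def sh_def by blast

lemma orbit_eq_iff: "orbit x = orbit y \<longleftrightarrow> (\<exists>n. y = sh n x)"
proof
  assume "orbit x = orbit y"
  moreover have "y \<in> orbit y" by (auto simp: orbit_def intro!: exI[of _ 0])
  ultimately have "y \<in> orbit x" by simp
  thus "\<exists>n. y = sh n x" by (auto simp: orbit_def sh_def)
next
  assume "\<exists>n. y = sh n x"
  then obtain n where y: "y = sh n x" by blast
  have "orbit (sh n x) = orbit x"
  proof (intro set_eqI iffI)
    fix z assume "z \<in> orbit (sh n x)"
    then obtain m where "z = sh m (sh n x)" by (auto simp: orbit_def sh_def)
    hence "z = sh (n + m) x" by simp
    thus "z \<in> orbit x" using orbit_mem by metis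
  next
    fix z assume "z \<in> orbit x"
    then obtain m where "z = sh m x" by (auto simp: orbit_def sh_def)
    hence "z = sh (m - n) (sh n x)" by simp
    thus "z \<in> orbit (sh n x)" using orbit_mem by metis
  qed
  thus "orbit x = orbit y" using y by simp
qed

lemma per_sh: "per (sh n x) \<longleftrightarrow> per x"
proof
  assume "per (sh n x)"
  then obtain p where p: "p > 0" "\<And>i. sh n x (i + p) = sh n x i" by (auto simp: per_def)
  have "x (i + p) = x i" for i using p(2)[of "i - n"] by (simp add: sh_def algebra_simps)
  thus "per x" using p(1) by (auto simp: per_def)
next
  assume "per x"
  then obtain p where p: "p > 0" "\<And>i. x (i + p) = x i" by (auto simp: per_def)
  have "sh n x (i + p) = sh n x i" for i using p(2)[of "i + n"] by (simp add: sh_def algebra_simps)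
  thus "per (sh n x)" using p(1) by (auto simp: per_def)
qed

lemma TT_sh: "TT X (sh n x) = {t. t + n \<in> TT X x}"
  by (simp add: TT_def ray_sh)

lemma per_ray: "\<forall>i. x (i + p) = x i \<Longrightarrow> ray x (t + p) = ray x t"
  by (auto simp: ray_def fun_eq_iff algebra_simps)

lemma per_ray_mult: "\<forall>i. x (i + p) = x i \<Longrightarrow> x (i + int q * p) = x i"
  using per_mult[of x p i q] by blast

lemma agree:
  assumes "\<And>d::nat. ray x (t - int d) = ray y (s - int d)"
  shows "y = sh (t - s) x"
proof
  fix i
  show "y i = sh (t - s) x i"
  proof (cases "i \<le> s")
    case True
    have "x (t - int (nat (s - i)) + int 0) = y (s - int (nat (s - i)) + int 0)"
      using fun_cong[OF assms[of "nat (s - i)"], of 0] unfolding ray_def .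
    thus ?thesis using True by (simp add: sh_def algebra_simps)
  next
    case False
    have "x (t - int 0 + int (nat (i - s))) = y (s - int 0 + int (nat (i - s)))"
      using fun_cong[OF assms[of 0], of "nat (i - s)"] unfolding ray_def .
    thus ?thesis using False by (simp add: sh_def algebra_simps)
  qed
qed

lemma card_le1_eq: "card (S::'a::finite set) \<le> 1 \<Longrightarrow> a \<in> S \<Longrightarrow> b \<in> S \<Longrightarrow> a = b"
  by (metis One_nat_def card_le_Suc0_iff_eq finite)

lemma Down:
  fixes X :: "(int \<Rightarrow> 'a::finite) set"
  assumes x: "x \<in> X" and y: "y \<in> X" and e: "ray x t = ray y s"
    and nb: "\<And>k. k < d \<Longrightarrow> ray x (t - int k) \<notin> Bset X"
  shows "ray x (t - int d) = ray y (s - int d)"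
  using nb
proof (induction d)
  case 0 then show ?case using e by simp
next
  case (Suc d)
  have IH: "ray x (t - int d) = ray y (s - int d)" using Suc by simp
  let ?u = "ray x (t - int d)"
  have "?u \<notin> Bset X" using Suc.prems by simp
  moreover have "isray X ?u" using isray_ray[OF x] .
  ultimately have c: "card (lext X ?u) \<le> 1" by (simp add: Bset_def)
  have "x (t - int d - 1) \<in> lext X ?u" using lext_ray[OF x] .
  moreover have "y (s - int d - 1) \<in> lext X ?u" using lext_ray[OF y] IH by metis
  ultimately have "x (t - int d - 1) = y (s - int d - 1)" using card_le1_eq[OF c] by blast
  hence "ray x (t - int d - 1) = ray y (s - int d - 1)" using IH by (simp add: ray_pred)
  thus ?case by (simp add: algebra_simps)
qed

lemma BR:
  fixes X :: "(int \<Rightarrow> 'a::finite) set"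
  assumes u: "isray X u" and v: "isray X v"
  shows "sig j u = sig j v \<Longrightarrow> u \<noteq> v \<Longrightarrow> \<exists>k<j. sig (Suc k) u \<in> Bset X"
proof (induction j)
  case 0 then show ?case by simp
next
  case (Suc j)
  show ?case
  proof (cases "sig j u = sig j v")
    case True then show ?thesis using Suc by (meson less_SucI)
  next
    case False
    have uj: "u j \<in> lext X (sig (Suc j) u)" by (rule lext_sig[OF u])
    have vj: "v j \<in> lext X (sig (Suc j) u)" using lext_sig[OF v, of j] Suc.prems(1) by simp
    have "u j \<noteq> v j" using False cns_sig[of u j] cns_sig[of v j] Suc.prems(1) by metis
    hence "card (lext X (sig (Suc j) u)) \<ge> 2" using uj vj
      by (metis One_nat_def card_le1_eq not_less_eq_eq numeral_2_eq_2)
    moreover have "isray X (sig (Suc j) u)" by (rule isray_sig[OF u])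
    ultimately show ?thesis by (auto simp: Bset_def)
  qed
qed

lemma infinite_below:
  fixes S :: "int set"
  assumes "infinite S" "S \<subseteq> {..t0}" shows "\<exists>t\<in>S. t \<le> i"
proof (rule ccontr)
  assume "\<not> (\<exists>t\<in>S. t \<le> i)"
  hence "S \<subseteq> {i<..t0}" using assms(2) by force
  thus False using assms(1) finite_subset by blast
qed

lemma infinite_above:
  fixes S :: "int set"
  assumes "infinite S" "S \<subseteq> {t0..}" shows "\<exists>t\<in>S. t \<ge> i"
proof (rule ccontr)
  assume "\<not> (\<exists>t\<in>S. t \<ge> i)"
  hence "S \<subseteq> {t0..<i}" using assms(2) by force
  thus False using assms(1) finite_subset by blast
qed

lemma TMIN:
  fixes X :: "(int \<Rightarrow> 'a::finite) set"
  assumes finB: "finite (Bset X)" and np: "\<not> per x" and ne: "t0 \<in> TT X x"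
  shows "\<exists>t\<in>TT X x. \<forall>t'\<in>TT X x. t \<le> t'"
proof (rule ccontr)
  assume nm: "\<not> ?thesis"
  define S where "S = TT X x \<inter> {..t0}"
  have inf: "infinite S"
  proof
    assume fS: "finite S"
    have "S \<noteq> {}" using ne by (auto simp: S_def)
    hence "Min S \<in> TT X x" "\<forall>t'\<in>TT X x. Min S \<le> t'"
      using fS Min_in[OF fS] Min_le[OF fS] by (auto simp: S_def) (metis IntI Min_le atMost_iff fS le_cases order_trans)
    thus False using nm by blast
  qed
  have "finite (ray x ` S)" using finB by (rule finite_subset[rotated]) (auto simp: S_def TT_def)
  then obtain t1 where t1: "t1 \<in> S" and inf1: "infinite {t\<in>S. ray x t = ray x t1}"
    using pigeonhole_infinite[OF inf] by blast
  define S' where "S' = {t\<in>S. ray x t = ray x t1}"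
  have S'sub: "S' \<subseteq> {..t0}" by (auto simp: S'_def S_def)
  obtain t2 where t2: "t2 \<in> S'" "t2 \<le> t1 - 1" using infinite_below[OF inf1[folded S'_def] S'sub] by blast
  define d where "d = t1 - t2"
  have d: "d > 0" using t2 by (simp add: d_def)
  have e12: "ray x t2 = ray x t1" using t2 by (simp add: S'_def)
  have "x (i + d) = x i" for i
  proof -
    obtain t where t: "t \<in> S'" "t \<le> i" using infinite_below[OF inf1[folded S'_def] S'sub] by blast
    have et: "ray x t = ray x t2" using t e12 by (simp add: S'_def)
    have "x i = x (t2 + (i - t))" using fun_cong[OF et, of "nat (i - t)"] t by (simp add: ray_def)
    moreover have "x (i + d) = x (t2 + (i - t) + d)" using fun_cong[OF et, of "nat (i - t + d)"] t d
      by (simp add: ray_def algebra_simps)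
    moreover have "x (t2 + (i - t) + d) = x (t2 + (i - t))"
      using fun_cong[OF e12, of "nat (i - t)"] t by (simp add: ray_def d_def algebra_simps)
    ultimately show ?thesis by simp
  qed
  hence "per x" using d by (auto simp: per_def)
  thus False using np by simp
qed

lemma TMAX:
  fixes X :: "(int \<Rightarrow> 'a::finite) set"
  assumes ss: "is_shift_space X" and finB: "finite (Bset X)" and x: "x \<in> X" and ne: "t0 \<in> TT X x"
    and nz: "\<not> (\<exists>z\<in>X. per z \<and> right_asym x z)"
  shows "\<exists>t\<in>TT X x. \<forall>t'\<in>TT X x. t' \<le> t"
proof (rule ccontr)
  assume nm: "\<not> ?thesis"
  define S where "S = TT X x \<inter> {t0..}"
  have inf: "infinite S"
  proof
    assume fS: "finite S"
    have "S \<noteq> {}" using ne by (auto simp: S_def)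
    hence "Max S \<in> TT X x" "\<forall>t'\<in>TT X x. t' \<le> Max S"
      using fS Max_in[OF fS] Max_ge[OF fS] by (auto simp: S_def) (metis IntI Max_ge atLeast_iff fS le_cases order_trans)
    thus False using nm by blast
  qed
  have "finite (ray x ` S)" using finB by (rule finite_subset[rotated]) (auto simp: S_def TT_def)
  then obtain t1 where t1: "t1 \<in> S" and inf1: "infinite {t\<in>S. ray x t = ray x t1}"
    using pigeonhole_infinite[OF inf] by blast
  define S' where "S' = {t\<in>S. ray x t = ray x t1}"
  have S'sub: "S' \<subseteq> {t0..}" by (auto simp: S'_def S_def)
  obtain t2 where t2: "t2 \<in> S'" "t2 \<ge> t1 + 1" using infinite_above[OF inf1[folded S'_def] S'sub] by blast
  have e12: "ray x t1 = ray x t2" using t2 by (simp add: S'_def)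
  obtain z where z: "z \<in> X" "\<exists>p>0. \<forall>i. z (i + p) = z i" "ray z t1 = ray x t1"
    using K6[OF ss x e12] t2 by auto
  have "per z" using z(2) by (simp add: per_def)
  moreover have "right_asym x z" using z(3) by (metis right_asym_ray)
  ultimately show False using nz z(1) by blast
qed



lemma card_image_rel:
  assumes r: "\<And>x y. x \<in> S \<Longrightarrow> y \<in> S \<Longrightarrow> f x = f y \<longleftrightarrow> g x = g y"
  shows "bij_betw (\<lambda>v. g (SOME x. x \<in> S \<and> f x = v)) (f ` S) (g ` S)"
proof -
  define h where "h v = g (SOME x. x \<in> S \<and> f x = v)" for v
  have hf: "h (f x) = g x" if "x \<in> S" for x
  proof -
    have "\<exists>x'. x' \<in> S \<and> f x' = f x" using that by blast
    hence "(SOME x'. x' \<in> S \<and> f x' = f x) \<in> S \<and> f (SOME x'. x' \<in> S \<and> f x' = f x) = f x"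
      by (rule someI_ex)
    hence "g (SOME x'. x' \<in> S \<and> f x' = f x) = g x" using r that by blast
    thus ?thesis by (simp add: h_def)
  qed
  have "inj_on h (f ` S)"
    by (rule inj_onI) (auto simp: hf r)
  moreover have "h ` f ` S = g ` S" by (force simp: hf image_iff)
  ultimately show ?thesis unfolding h_def[symmetric] bij_betw_def by simp
qed

locale cls =
  fixes X :: "(int \<Rightarrow> 'a::finite) set" and x0 :: "int \<Rightarrow> 'a"
  assumes ss: "is_shift_space X" and finB: "finite (Bset X)" and x0: "x0 \<in> X"
begin

abbreviation "C \<equiv> asym_eqclass X x0"

definition BC where "BC = {b\<in>Bset X. \<exists>y\<in>C. ray y 0 = b}"
definition S1 where "S1 = {x\<in>C. \<not> per x \<and> TT X x \<noteq> {}}"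
definition OP where "OP = orbit ` {x\<in>C. per x}"
definition O0 where "O0 = orbit ` {x\<in>C. \<not> per x \<and> TT X x = {}}"
definition O1 where "O1 = orbit ` S1"
definition Nonterm where "Nonterm = {b\<in>BC. \<exists>j\<ge>1. sig j b \<in> Bset X}"
definition Term where "Term = BC - Nonterm"
definition PP where "PP = (SIGMA b:BC. lext X b)"
definition Im where "Im = {(b,a)\<in>PP. \<exists>y\<in>X. ray y 0 = b \<and> y (-1) = a \<and> (\<forall>t<0. ray y t \<notin> Bset X)}"
definition tm where "tm x = (LEAST t. t \<in> TT X x)"
definition phi where "phi x = (ray x (tm x), x (tm x - 1))"
definition jj where "jj b = (LEAST j. 1 \<le> j \<and> sig j b \<in> Bset X)"
definition chi where "chi b = (sig (jj b) b, b (jj b - 1))"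

lemma memC: "y \<in> C \<longleftrightarrow> y \<in> X \<and> right_asym x0 y"
  by (simp add: asym_eqclass_def)

lemma x0C: "x0 \<in> C" using x0 right_asym_refl by (simp add: memC)

lemma C_asym: "y \<in> C \<Longrightarrow> z \<in> C \<Longrightarrow> right_asym y z"
  by (meson memC right_asym_sym right_asym_trans)

lemma C_ray: "y \<in> C \<Longrightarrow> z \<in> X \<Longrightarrow> ray y t = ray z s \<Longrightarrow> z \<in> C"
  by (meson memC right_asym_ray right_asym_trans)

lemma C_sh: "y \<in> C \<Longrightarrow> sh n y \<in> C"
  using C_ray[of y "sh n y" n 0] sh_in[OF ss] by (simp add: memC ray_sh)

lemma CX: "y \<in> C \<Longrightarrow> y \<in> X" by (simp add: memC)

lemma BC_pt: "b \<in> BC \<Longrightarrow> \<exists>y\<in>C. ray y 0 = b" by (auto simp: BC_def)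

lemma BC_X: "b \<in> BC \<Longrightarrow> y \<in> X \<Longrightarrow> ray y 0 = b \<Longrightarrow> y \<in> C"
  using BC_pt C_ray by metis

lemma BC_B: "b \<in> BC \<Longrightarrow> b \<in> Bset X" by (simp add: BC_def)

lemma finBC: "finite BC" using finB by (rule finite_subset[rotated]) (auto simp: BC_def)

lemma finPP: "finite PP" unfolding PP_def using finBC by auto

lemma tm_prop:
  assumes x: "x \<in> S1"
  shows "tm x \<in> TT X x" and "\<And>t. t \<in> TT X x \<Longrightarrow> tm x \<le> t"
proof -
  obtain t0 where "t0 \<in> TT X x" and np: "\<not> per x" using x by (auto simp: S1_def)
  then obtain t where t: "t \<in> TT X x" "\<forall>t'\<in>TT X x. t \<le> t'" using TMIN[OF finB] by blast
  have "tm x = t" unfolding tm_def by (rule Least_equality) (use t in auto)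
  thus "tm x \<in> TT X x" "\<And>t. t \<in> TT X x \<Longrightarrow> tm x \<le> t" using t by auto
qed

lemma S1_sh: "x \<in> S1 \<Longrightarrow> sh n x \<in> S1"
proof -
  assume x: "x \<in> S1"
  then obtain t where "t \<in> TT X x" by (auto simp: S1_def)
  hence "t - n \<in> TT X (sh n x)" by (simp add: TT_sh)
  thus ?thesis using x by (auto simp: S1_def per_sh C_sh)
qed

lemma tm_sh:
  assumes x: "x \<in> S1" shows "tm (sh n x) = tm x - n"
  unfolding tm_def[of "sh n x"]
proof (rule Least_equality)
  show "tm x - n \<in> TT X (sh n x)" using tm_prop(1)[OF x] by (simp add: TT_sh)
  fix t assume "t \<in> TT X (sh n x)"
  hence "t + n \<in> TT X x" by (simp add: TT_sh)
  thus "tm x - n \<le> t" using tm_prop(2)[OF x] by force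
qed

lemma phi_sh: assumes x: "x \<in> S1" shows "phi (sh n x) = phi x"
  unfolding phi_def tm_sh[OF x] ray_sh by (simp add: sh_def)

lemma phi_Im: "x \<in> S1 \<Longrightarrow> phi x \<in> Im"
proof -
  assume x: "x \<in> S1"
  define y where "y = sh (tm x) x"
  have xC: "x \<in> C" using x by (simp add: S1_def)
  have yX: "y \<in> X" using sh_in[OF ss CX[OF xC]] by (simp add: y_def)
  have r0: "ray y 0 = ray x (tm x)" by (simp add: y_def ray_sh)
  have y1: "y (-1) = x (tm x - 1)" by (simp add: y_def sh_def)
  have nb: "\<forall>t<0. ray y t \<notin> Bset X"
  proof (intro allI impI)
    fix t :: int assume "t < 0"
    hence "\<not> tm x \<le> t + tm x" by simp
    hence "t + tm x \<notin> TT X x" using tm_prop(2)[OF x] by blast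
    thus "ray y t \<notin> Bset X" by (simp add: y_def ray_sh TT_def)
  qed
  have bB: "ray x (tm x) \<in> Bset X" using tm_prop(1)[OF x] by (simp add: TT_def)
  have bBC: "ray x (tm x) \<in> BC" using bB C_sh[OF xC, of "tm x"] r0 by (auto simp: BC_def y_def)
  have "x (tm x - 1) \<in> lext X (ray x (tm x))" by (rule lext_ray[OF CX[OF xC]])
  hence "phi x \<in> PP" using bBC by (simp add: PP_def phi_def)
  thus "phi x \<in> Im" using yX r0 y1 nb by (auto simp: Im_def phi_def)
qed

lemma Im_phi: "p \<in> Im \<Longrightarrow> \<exists>x\<in>S1. phi x = p"
proof -
  assume p: "p \<in> Im"
  then obtain b a y where pba: "p = (b,a)" and bBC: "b \<in> BC" and yX: "y \<in> X" and r0: "ray y 0 = b"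
    and y1: "y (-1) = a" and nb: "\<forall>t<0. ray y t \<notin> Bset X" by (auto simp: Im_def PP_def)
  have yC: "y \<in> C" by (rule BC_X[OF bBC yX r0])
  have bB: "b \<in> Bset X" using BC_B[OF bBC] .
  have np: "\<not> per y"
  proof
    assume "per y"
    then obtain q where q: "q > 0" "\<forall>i. y (i + q) = y i" by (auto simp: per_def)
    have "ray y (- q + q) = ray y (- q)" by (rule per_ray[OF q(2)])
    hence "ray y (- q) \<in> Bset X" using r0 bB by simp
    thus False using nb q(1) by auto
  qed
  have T0: "0 \<in> TT X y" using r0 bB by (simp add: TT_def)
  have yS1: "y \<in> S1" using yC np T0 by (auto simp: S1_def)
  have "tm y = 0" unfolding tm_def
    by (rule Least_equality) (use T0 nb in \<open>auto simp: TT_def not_le[symmetric]\<close>)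
  hence "phi y = p" using r0 y1 pba by (simp add: phi_def)
  thus ?thesis using yS1 by blast
qed

lemma phi_orbit:
  assumes x: "x \<in> S1" and y: "y \<in> S1"
  shows "phi x = phi y \<longleftrightarrow> orbit x = orbit y"
proof
  assume "orbit x = orbit y"
  then obtain n where "y = sh n x" by (auto simp: orbit_eq_iff)
  thus "phi x = phi y" using phi_sh[OF x] by simp
next
  assume e: "phi x = phi y"
  define x' where "x' = sh (tm x) x"
  define y' where "y' = sh (tm y) y"
  have xX: "x' \<in> X" using x sh_in[OF ss] by (auto simp: x'_def S1_def CX)
  have yX: "y' \<in> X" using y sh_in[OF ss] by (auto simp: y'_def S1_def CX)
  have e0: "ray x (tm x) = ray y (tm y)" "x (tm x - 1) = y (tm y - 1)" using e by (simp_all add: phi_def)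
  have "ray x' 0 = ray y' 0" unfolding x'_def y'_def ray_sh using e0 by simp
  moreover have "x' (-1) = y' (-1)" unfolding x'_def y'_def sh_def using e0 by (simp add: algebra_simps)
  ultimately have "ray x' 0 = ray y' 0" "x' (-1) = y' (-1)" .
  hence e1: "ray x' (0 - 1) = ray y' (0 - 1)" unfolding ray_pred by simp
  have nbx: "ray x' t \<notin> Bset X" if "t < 0" for t
  proof -
    have "\<not> tm x \<le> t + tm x" using that by simp
    hence "t + tm x \<notin> TT X x" using tm_prop(2)[OF x] by blast
    thus ?thesis by (simp add: x'_def ray_sh TT_def)
  qed
  have all: "ray x' (-1 - int d) = ray y' (-1 - int d)" for d
    using Down[OF xX yX e1[simplified], of d] nbx by (simp add: algebra_simps)
  have "y' = sh (-1 - (-1)) x'" by (rule agree) (use all in auto)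
  hence "y' = x'" by simp
  hence "y = sh (tm x - tm y) x" unfolding x'_def y'_def
    by (metis add.commute add_0 diff_add_cancel sh_0 sh_sh)
  thus "orbit x = orbit y" by (auto simp: orbit_eq_iff)
qed

lemma phi_image: "phi ` S1 = Im"
  using phi_Im Im_phi by blast

lemma O1_card: "card O1 = card Im" and O1_fin: "finite O1"
proof -
  have b: "bij_betw (\<lambda>v. phi (SOME x. x \<in> S1 \<and> orbit x = v)) (orbit ` S1) (phi ` S1)"
    by (rule card_image_rel) (simp add: phi_orbit)
  show "card O1 = card Im" using bij_betw_same_card[OF b] by (simp add: O1_def phi_image)
  have "finite Im" using finPP by (rule finite_subset[rotated]) (auto simp: Im_def)
  thus "finite O1" using bij_betw_finite[OF b] by (simp add: O1_def phi_image)
qed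

end


context cls begin

lemma ray0_sig: "ray z 0 = b \<Longrightarrow> ray z (int i) = sig i b"
  using sig_ray[of i z 0] by simp

lemma ray0_val: "ray z 0 = b \<Longrightarrow> z (int i) = b i"
  by (auto simp: ray_def)

lemma jj_prop:
  assumes b: "b \<in> Nonterm"
  shows "1 \<le> jj b" "sig (jj b) b \<in> Bset X" "\<And>i. 1 \<le> i \<Longrightarrow> i < jj b \<Longrightarrow> sig i b \<notin> Bset X"
proof -
  have ex: "\<exists>j. 1 \<le> j \<and> sig j b \<in> Bset X" using b by (auto simp: Nonterm_def)
  show "1 \<le> jj b" "sig (jj b) b \<in> Bset X" using LeastI_ex[OF ex] by (auto simp: jj_def)
  show "\<And>i. 1 \<le> i \<Longrightarrow> i < jj b \<Longrightarrow> sig i b \<notin> Bset X" using not_less_Least by (auto simp: jj_def)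
qed

lemma Nonterm_BC: "b \<in> Nonterm \<Longrightarrow> b \<in> BC" by (simp add: Nonterm_def)

lemma CH1:
  assumes b: "b \<in> Nonterm" shows "chi b \<in> PP - Im"
proof -
  define j where "j = jj b"
  have j1: "1 \<le> j" and jB: "sig j b \<in> Bset X" using jj_prop[OF b] by (auto simp: j_def)
  obtain z where zC: "z \<in> C" and z0: "ray z 0 = b" using BC_pt[OF Nonterm_BC[OF b]] by blast
  have zX: "z \<in> X" using CX[OF zC] .
  have rzj: "ray z (int j) = sig j b" by (rule ray0_sig[OF z0])
  have "ray (sh (int j) z) 0 = sig j b" using rzj by (simp add: ray_sh)
  hence b'BC: "sig j b \<in> BC" using jB C_sh[OF zC, of "int j"] unfolding BC_def by blast
  have zj1: "z (int j - 1) = b (j - 1)" using ray0_val[OF z0, of "j - 1"] j1 by (simp add: of_nat_diff)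
  have "z (int j - 1) \<in> lext X (ray z (int j))" by (rule lext_ray[OF zX])
  hence aL: "b (j - 1) \<in> lext X (sig j b)" using zj1 rzj by simp
  have inPP: "chi b \<in> PP" using b'BC aL by (simp add: PP_def chi_def j_def)
  have "chi b \<notin> Im"
  proof
    assume "chi b \<in> Im"
    then obtain y where yX: "y \<in> X" and y0: "ray y 0 = sig j b" and y1: "y (-1) = b (j - 1)"
      and nb: "\<forall>t<0. ray y t \<notin> Bset X" by (auto simp: Im_def chi_def j_def)
    define y' where "y' = sh (int j) z"
    have y'X: "y' \<in> X" using sh_in[OF ss zX] by (simp add: y'_def)
    have y'0: "ray y' 0 = sig j b" using rzj by (simp add: y'_def ray_sh)
    have y'1: "y' (-1) = b (j - 1)" using zj1 by (simp add: y'_def sh_def)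
    have e1: "ray y (0 - 1) = ray y' (0 - 1)" unfolding ray_pred using y0 y'0 y1 y'1 by simp
    have "ray y (0 - 1 - int (j - 1)) = ray y' (0 - 1 - int (j - 1))"
      by (rule Down[OF yX y'X e1]) (use nb in auto)
    moreover have "0 - 1 - int (j - 1) = - int j" using j1 by (simp add: of_nat_diff)
    ultimately have "ray y (- int j) = ray z 0" by (simp add: y'_def ray_sh)
    hence "ray y (- int j) \<in> Bset X" using z0 BC_B[OF Nonterm_BC[OF b]] by simp
    thus False using nb j1 by auto
  qed
  thus ?thesis using inPP by simp
qed

lemma CH2_aux:
  assumes b1: "b1 \<in> Nonterm" and b2: "b2 \<in> Nonterm" and e: "chi b1 = chi b2" and le: "jj b1 \<le> jj b2"
  shows "b1 = b2"
proof -
  define j1 where "j1 = jj b1"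
  define j2 where "j2 = jj b2"
  have j11: "1 \<le> j1" and j21: "1 \<le> j2" using jj_prop[OF b1] jj_prop[OF b2] by (auto simp: j1_def j2_def)
  obtain z1 where z1C: "z1 \<in> C" and z10: "ray z1 0 = b1" using BC_pt[OF Nonterm_BC[OF b1]] by blast
  obtain z2 where z2C: "z2 \<in> C" and z20: "ray z2 0 = b2" using BC_pt[OF Nonterm_BC[OF b2]] by blast
  define y1 where "y1 = sh (int j1) z1"
  define y2 where "y2 = sh (int j2) z2"
  have y1X: "y1 \<in> X" using sh_in[OF ss CX[OF z1C]] by (simp add: y1_def)
  have y2X: "y2 \<in> X" using sh_in[OF ss CX[OF z2C]] by (simp add: y2_def)
  have y10: "ray y1 0 = sig j1 b1" using ray0_sig[OF z10] by (simp add: y1_def ray_sh)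
  have y20: "ray y2 0 = sig j2 b2" using ray0_sig[OF z20] by (simp add: y2_def ray_sh)
  have y11: "y1 (-1) = b1 (j1 - 1)" using ray0_val[OF z10, of "j1 - 1"] j11 by (simp add: y1_def sh_def of_nat_diff)
  have y21: "y2 (-1) = b2 (j2 - 1)" using ray0_val[OF z20, of "j2 - 1"] j21 by (simp add: y2_def sh_def of_nat_diff)
  have ce: "sig j1 b1 = sig j2 b2" "b1 (j1 - 1) = b2 (j2 - 1)" using e by (auto simp: chi_def j1_def j2_def)
  have e1: "ray y1 (0 - 1) = ray y2 (0 - 1)" unfolding ray_pred using y10 y20 y11 y21 ce by simp
  have nb: "ray y1 (0 - 1 - int k) \<notin> Bset X" if "k < j1 - 1" for k
  proof -
    have "ray y1 (0 - 1 - int k) = ray z1 (int (j1 - 1 - k))" using that by (simp add: y1_def ray_sh of_nat_diff algebra_simps)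
    also have "\<dots> = sig (j1 - 1 - k) b1" by (rule ray0_sig[OF z10])
    finally show ?thesis using jj_prop(3)[OF b1, of "j1 - 1 - k"] that by (simp add: j1_def)
  qed
  have "ray y1 (0 - 1 - int (j1 - 1)) = ray y2 (0 - 1 - int (j1 - 1))"
    by (rule Down[OF y1X y2X e1]) (use nb in auto)
  moreover have "0 - 1 - int (j1 - 1) = - int j1" using j11 by (simp add: of_nat_diff)
  ultimately have "ray z1 0 = ray z2 (int (j2 - j1))" using le
    by (simp add: y1_def y2_def ray_sh j1_def j2_def of_nat_diff)
  hence eb: "b1 = sig (j2 - j1) b2" using z10 ray0_sig[OF z20] by simp
  show ?thesis
  proof (cases "j1 < j2")
    case True
    have "sig (j2 - j1) b2 \<notin> Bset X" using jj_prop(3)[OF b2, of "j2 - j1"] True j11 by (simp add: j2_def)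
    moreover have "b1 \<in> Bset X" using BC_B[OF Nonterm_BC[OF b1]] .
    ultimately show ?thesis using eb by simp
  next
    case False
    hence "j2 - j1 = 0" by simp
    thus ?thesis using eb by simp
  qed
qed

lemma CH2: "inj_on chi Nonterm"
  by (rule inj_onI) (metis CH2_aux nat_le_linear)

lemma CH3:
  assumes p: "p \<in> PP - Im" shows "p \<in> chi ` Nonterm"
proof -
  obtain b a where pba: "p = (b,a)" and bBC: "b \<in> BC" and aL: "a \<in> lext X b" using p by (auto simp: PP_def)
  obtain y where yX: "y \<in> X" and y0: "ray y 0 = b" and y1: "y (-1) = a" using K3[OF ss aL] by blast
  have yC: "y \<in> C" by (rule BC_X[OF bBC yX y0])
  have "\<not> (\<forall>t<0. ray y t \<notin> Bset X)" using p pba yX y0 y1 by (auto simp: Im_def)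
  then obtain t where t: "t < 0" "ray y t \<in> Bset X" by blast
  have ex: "\<exists>j. 1 \<le> j \<and> ray y (- int j) \<in> Bset X" using t by (intro exI[of _ "nat (-t)"]) auto
  define J where "J = (LEAST j. 1 \<le> j \<and> ray y (- int j) \<in> Bset X)"
  have J1: "1 \<le> J" and JB: "ray y (- int J) \<in> Bset X" using LeastI_ex[OF ex] by (auto simp: J_def)
  have Jmin: "\<And>j. 1 \<le> j \<Longrightarrow> ray y (- int j) \<in> Bset X \<Longrightarrow> J \<le> j" by (simp add: J_def Least_le)
  define b' where "b' = ray y (- int J)"
  have sigb': "sig i b' = ray y (int i - int J)" for i by (simp add: b'_def sig_ray algebra_simps)
  have "ray (sh (- int J) y) 0 = b'" by (simp add: ray_sh b'_def)
  hence b'BC: "b' \<in> BC" using JB C_sh[OF yC, of "- int J"] unfolding BC_def b'_def by blast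
  have sJ: "sig J b' = b" using sigb'[of J] y0 by simp
  have bB: "b \<in> Bset X" using BC_B[OF bBC] .
  have NT: "b' \<in> Nonterm" using b'BC sJ bB J1 by (auto simp: Nonterm_def)
  have jjJ: "jj b' = J" unfolding jj_def
  proof (rule Least_equality)
    show "1 \<le> J \<and> sig J b' \<in> Bset X" using J1 sJ bB by simp
  next
    fix i assume i: "1 \<le> i \<and> sig i b' \<in> Bset X"
    show "J \<le> i"
    proof (rule ccontr)
      assume "\<not> J \<le> i"
      hence "ray y (- int (J - i)) \<in> Bset X" using i sigb'[of i] by (simp add: of_nat_diff)
      hence "J \<le> J - i" using Jmin[of "J - i"] \<open>\<not> J \<le> i\<close> by simp
      thus False using i \<open>\<not> J \<le> i\<close> by linarith
    qed
  qed
  have "b' (J - 1) = y (-1)" using J1 by (simp add: b'_def ray_def of_nat_diff)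
  hence "chi b' = p" using jjJ sJ y1 pba by (simp add: chi_def)
  thus ?thesis using NT by blast
qed

lemma card_NI: "card (PP - Im) = card Nonterm"
proof -
  have "bij_betw chi Nonterm (PP - Im)"
    unfolding bij_betw_def using CH1 CH2 CH3 by blast
  thus ?thesis by (simp add: bij_betw_same_card)
qed

end


context cls begin

lemma per_period:
  assumes "per x" obtains p where "p > 0" "\<And>i. x (i + p) = x i"
  using assms by (auto simp: per_def)

lemma per_orb:
  assumes xC: "x \<in> C" and yC: "y \<in> C" and px: "per x" and py: "per y"
  shows "\<exists>n. y = sh n x"
proof -
  obtain p where p: "p > 0" "\<And>i. x (i + p) = x i" using per_period[OF px] by blast
  obtain q where q: "q > 0" "\<And>i. y (i + q) = y i" using per_period[OF py] by blast
  define Q where "Q = p * q"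
  have Q: "Q > 0" using p q by (simp add: Q_def)
  have xQ: "x (i + Q) = x i" for i using per_mult[of x p i "nat q"] p q by (simp add: Q_def mult.commute)
  have yQ: "y (i + Q) = y i" for i using per_mult[of y q i "nat p"] p q by (simp add: Q_def)
  obtain t s where e: "ray x t = ray y s" using C_asym[OF xC yC] by (auto simp: right_asym_ray)
  have "y i = x (i + (t - s))" for i
  proof -
    define m where "m = nat (s - i)"
    have "int m * 1 \<le> int m * Q" using Q by (intro mult_left_mono) auto
    hence ge: "i + int m * Q \<ge> s" by (simp add: m_def split: if_splits)
    have "y i = y (i + int m * Q)" using per_mult[of y Q i m] yQ by simp
    also have "\<dots> = y (s + int (nat (i + int m * Q - s)))" using ge by simp
    also have "\<dots> = x (t + int (nat (i + int m * Q - s)))" by (metis e ray_eq_iff)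
    also have "\<dots> = x ((i + (t - s)) + int m * Q)" using ge by (simp add: algebra_simps)
    also have "\<dots> = x (i + (t - s))" using per_mult[of x Q "i + (t - s)" m] xQ by simp
    finally show ?thesis .
  qed
  hence "y = sh (t - s) x" by (auto simp: sh_def)
  thus ?thesis by blast
qed

lemma O0_all:
  assumes xC: "x \<in> C" and T0: "TT X x = {}" and yC: "y \<in> C"
  shows "\<exists>n. y = sh n x"
proof -
  obtain t s where e: "ray x t = ray y s" using C_asym[OF xC yC] by (auto simp: right_asym_ray)
  have "ray x (t - int d) = ray y (s - int d)" for d
    by (rule Down[OF CX[OF xC] CX[OF yC] e]) (use T0 in \<open>auto simp: TT_def\<close>)
  hence "y = sh (t - s) x" by (rule agree)
  thus ?thesis by blast
qed

lemma O0_BC: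
  assumes xC: "x \<in> C" and T0: "TT X x = {}" shows "BC = {}"
proof (rule ccontr)
  assume "BC \<noteq> {}"
  then obtain b where b: "b \<in> BC" by blast
  obtain y where yC: "y \<in> C" and y0: "ray y 0 = b" using BC_pt[OF b] by blast
  obtain n where "y = sh n x" using O0_all[OF xC T0 yC] by blast
  hence "ray x n = b" using y0 by (simp add: ray_sh)
  hence "n \<in> TT X x" using BC_B[OF b] by (simp add: TT_def)
  thus False using T0 by simp
qed

lemma Term_BC: "b \<in> Term \<Longrightarrow> b \<in> BC" by (simp add: Term_def)

lemma Term_not: "b \<in> Term \<Longrightarrow> 1 \<le> j \<Longrightarrow> sig j b \<notin> Bset X"
  by (auto simp: Term_def Nonterm_def)

lemma isray_B: "b \<in> Bset X \<Longrightarrow> isray X b" by (simp add: Bset_def)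

lemma OP_Term:
  assumes zC: "z \<in> C" and pz: "per z" shows "Term = {}"
proof (rule ccontr)
  assume "Term \<noteq> {}"
  then obtain b where b: "b \<in> Term" by blast
  obtain y where yC: "y \<in> C" and y0: "ray y 0 = b" using BC_pt[OF Term_BC[OF b]] by blast
  obtain t s where "ray y t = ray z s" using C_asym[OF yC zC] by (auto simp: right_asym_ray)
  then obtain t s where e: "ray y t = ray z s" and t0: "t \<ge> 0" using ray_shift_any[of y _ z _ 0 0] by blast
  define i where "i = nat t"
  have sb: "sig i b = ray z s" using ray0_sig[OF y0, of i] e t0 by (simp add: i_def)
  define v where "v = ray z (s - int i)"
  have sv: "sig i v = ray z s" by (simp add: v_def sig_ray)
  have rb: "isray X b" using isray_B[OF BC_B[OF Term_BC[OF b]]] .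
  have rv: "isray X v" using isray_ray[OF CX[OF zC]] by (simp add: v_def)
  show False
  proof (cases "v = b")
    case False
    then obtain k where "sig (Suc k) b \<in> Bset X" using BR[OF rb rv, of i] sb sv by metis
    thus False using Term_not[OF b, of "Suc k"] by simp
  next
    case True
    obtain p where p: "p > 0" "\<And>i. z (i + p) = z i" using per_period[OF pz] by blast
    have "sig (nat p) v = ray z (s - int i + p)" using p(1) by (simp add: v_def sig_ray)
    also have "\<dots> = v" unfolding v_def by (rule per_ray) (use p in auto)
    finally have "sig (nat p) b = b" using True by simp
    moreover have "b \<in> Bset X" using BC_B[OF Term_BC[OF b]] .
    moreover have "1 \<le> nat p" using p(1) by (simp add: Suc_le_eq)
    ultimately show False using Term_not[OF b, of "nat p"] by simp
  qed
qed

lemma Term_aux: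
  assumes b1: "b1 \<in> Term" and b2: "b2 \<in> Term" and e: "sig i b1 = sig j b2" and le: "j \<le> i"
  shows "b1 = b2"
proof -
  define u where "u = sig (i - j) b1"
  have su: "sig j u = sig j b2" using e le by (simp add: u_def)
  have r1: "isray X b1" using isray_B[OF BC_B[OF Term_BC[OF b1]]] .
  have r2: "isray X b2" using isray_B[OF BC_B[OF Term_BC[OF b2]]] .
  have ru: "isray X u" using isray_sig[OF r1] by (simp add: u_def)
  show ?thesis
  proof (cases "u = b2")
    case False
    then obtain k where "sig (Suc k) b2 \<in> Bset X" using BR[OF r2 ru, of j] su by metis
    thus ?thesis using Term_not[OF b2, of "Suc k"] by simp
  next
    case True
    show ?thesis
    proof (cases "j < i")
      case True
      have "sig (i - j) b1 \<in> Bset X" using \<open>u = b2\<close> BC_B[OF Term_BC[OF b2]] by (simp add: u_def)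
      thus ?thesis using Term_not[OF b1, of "i - j"] True by simp
    next
      case False
      hence "i = j" using le by simp
      thus ?thesis using \<open>u = b2\<close> by (simp add: u_def)
    qed
  qed
qed

lemma Term_le1: "b1 \<in> Term \<Longrightarrow> b2 \<in> Term \<Longrightarrow> b1 = b2"
proof -
  assume b1: "b1 \<in> Term" and b2: "b2 \<in> Term"
  obtain y1 where y1C: "y1 \<in> C" and y10: "ray y1 0 = b1" using BC_pt[OF Term_BC[OF b1]] by blast
  obtain y2 where y2C: "y2 \<in> C" and y20: "ray y2 0 = b2" using BC_pt[OF Term_BC[OF b2]] by blast
  obtain t s where "ray y1 t = ray y2 s" using C_asym[OF y1C y2C] by (auto simp: right_asym_ray)
  then obtain t s where e: "ray y1 t = ray y2 s" and t0: "t \<ge> 0" and s0: "s \<ge> 0"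
    using ray_shift_any[of y1 _ y2 _ 0 0] by blast
  have "sig (nat t) b1 = sig (nat s) b2" using ray0_sig[OF y10, of "nat t"] ray0_sig[OF y20, of "nat s"] e t0 s0 by simp
  thus "b1 = b2" using Term_aux[OF b1 b2] Term_aux[OF b2 b1] by (metis nat_le_linear)
qed

lemma Term_ex:
  assumes nP: "{x\<in>C. per x} = {}" and n0: "{x\<in>C. \<not> per x \<and> TT X x = {}} = {}"
  shows "Term \<noteq> {}"
proof -
  have np: "\<not> per x0" using nP x0C by auto
  then obtain t0 where t0: "t0 \<in> TT X x0" using n0 x0C by auto
  have nz: "\<not> (\<exists>z\<in>X. per z \<and> right_asym x0 z)" using nP by (auto simp: memC)
  obtain tM where tM: "tM \<in> TT X x0" "\<forall>t'\<in>TT X x0. t' \<le> tM" using TMAX[OF ss finB x0 t0 nz] by blast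
  define b where "b = ray x0 tM"
  have bB: "b \<in> Bset X" using tM by (simp add: TT_def b_def)
  have "ray (sh tM x0) 0 = b" by (simp add: ray_sh b_def)
  hence bBC: "b \<in> BC" using bB C_sh[OF x0C, of tM] unfolding BC_def by blast
  have "sig j b \<notin> Bset X" if "1 \<le> j" for j
  proof
    assume "sig j b \<in> Bset X"
    hence "tM + int j \<in> TT X x0" by (simp add: TT_def b_def sig_ray)
    thus False using tM that by force
  qed
  hence "b \<in> Term" using bBC by (auto simp: Term_def Nonterm_def)
  thus ?thesis by blast
qed

lemma card_le1: "(\<And>a b. a \<in> S \<Longrightarrow> b \<in> S \<Longrightarrow> a = b) \<Longrightarrow> card S \<le> 1 \<and> finite S"
  by (metis card_le_Suc0_iff_eq One_nat_def finite_subset_induct' finite.emptyI finite_insert subsetI insertCI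
        is_singletonI' is_singleton_the_elem)

lemma sum1: "card OP + card O0 + card Term = 1" and finOP: "finite OP" and finO0: "finite O0"
proof -
  have OPle: "card OP \<le> 1 \<and> finite OP"
  proof (rule card_le1)
    fix a b assume "a \<in> OP" "b \<in> OP"
    then obtain x y where xy: "a = orbit x" "b = orbit y" "x \<in> C" "y \<in> C" "per x" "per y" by (auto simp: OP_def)
    then obtain n where "y = sh n x" using per_orb by blast
    thus "a = b" using xy by (auto simp: orbit_eq_iff)
  qed
  have O0le: "card O0 \<le> 1 \<and> finite O0"
  proof (rule card_le1)
    fix a b assume "a \<in> O0" "b \<in> O0"
    then obtain x y where xy: "a = orbit x" "b = orbit y" "x \<in> C" "y \<in> C" "TT X x = {}" by (auto simp: O0_def)
    then obtain n where "y = sh n x" using O0_all by blast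
    thus "a = b" using xy by (auto simp: orbit_eq_iff)
  qed
  have Tle: "card Term \<le> 1 \<and> finite Term" by (rule card_le1) (auto dest: Term_le1)
  show "finite OP" "finite O0" using OPle O0le by auto
  show "card OP + card O0 + card Term = 1"
  proof (cases "{x\<in>C. \<not> per x \<and> TT X x = {}} = {}")
    case False
    then obtain x where x: "x \<in> C" "\<not> per x" "TT X x = {}" by auto
    have "O0 \<noteq> {}" using x by (auto simp: O0_def)
    hence "0 < card O0" using O0le by (simp add: card_gt_0_iff)
    hence c0: "card O0 = 1" using O0le by linarith
    have "OP = {}"
    proof (rule ccontr)
      assume "OP \<noteq> {}"
      then obtain z where z: "z \<in> C" "per z" by (auto simp: OP_def)
      obtain n where "z = sh n x" using O0_all[OF x(1) x(3) z(1)] by blast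
      thus False using z(2) x(2) by (simp add: per_sh)
    qed
    moreover have "Term = {}" using O0_BC[OF x(1) x(3)] by (simp add: Term_def)
    ultimately show ?thesis using c0 by simp
  next
    case True
    hence O0e: "O0 = {}" by (simp add: O0_def)
    show ?thesis
    proof (cases "{x\<in>C. per x} = {}")
      case False
      then obtain z where z: "z \<in> C" "per z" by auto
      have "OP \<noteq> {}" using z by (auto simp: OP_def)
      hence "0 < card OP" using OPle by (simp add: card_gt_0_iff)
      hence "card OP = 1" using OPle by linarith
      thus ?thesis using OP_Term[OF z] O0e by simp
    next
      case nP: True
      hence "OP = {}" by (simp add: OP_def)
      moreover have "Term \<noteq> {}" using Term_ex[OF nP True] .
      hence "0 < card Term" using Tle by (simp add: card_gt_0_iff)
      hence "card Term = 1" using Tle by linarith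
      ultimately show ?thesis using O0e by simp
    qed
  qed
qed

lemma class_formula:
  shows "finite (orbit ` C)" and "card (orbit ` C) = 1 + (\<Sum>b\<in>BC. card (lext X b) - 1)"
proof -
  have split: "orbit ` C = OP \<union> O0 \<union> O1"
  proof
    show "orbit ` C \<subseteq> OP \<union> O0 \<union> O1"
    proof
      fix o' assume "o' \<in> orbit ` C"
      then obtain x where x: "x \<in> C" "o' = orbit x" by blast
      show "o' \<in> OP \<union> O0 \<union> O1"
      proof (cases "per x")
        case True then show ?thesis using x by (auto simp: OP_def)
      next
        case False
        show ?thesis
        proof (cases "TT X x = {}")
          case True then show ?thesis using x False by (auto simp: O0_def)
        next
          case F2: False then show ?thesis using x False by (auto simp: O1_def S1_def)
        qed
      qed
    qed
  qed (auto simp: OP_def O0_def O1_def S1_def)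
  have d1: "OP \<inter> O0 = {}" "OP \<inter> O1 = {}" "O0 \<inter> O1 = {}"
    by (auto simp: OP_def O0_def O1_def S1_def orbit_eq_iff per_sh TT_sh)
  show fin: "finite (orbit ` C)" using split finOP finO0 O1_fin by simp
  have c: "card (orbit ` C) = card OP + card O0 + card O1"
    unfolding split using finOP finO0 O1_fin d1 by (simp add: card_Un_disjoint Int_Un_distrib2)
  have cPP: "card PP = (\<Sum>b\<in>BC. card (lext X b))" unfolding PP_def by (rule card_SigmaI) (auto simp: finBC)
  have ImPP: "Im \<subseteq> PP" by (auto simp: Im_def)
  have cIm: "card PP = card Im + card (PP - Im)"
    using card_Diff_subset[OF finite_subset[OF ImPP finPP] ImPP] card_mono[OF finPP ImPP] by simp
  have cBC: "card BC = card Nonterm + card Term"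
  proof -
    have "Nonterm \<subseteq> BC" by (auto simp: Nonterm_def)
    thus ?thesis using card_Diff_subset[OF finite_subset[OF _ finBC]] card_mono[OF finBC] by (simp add: Term_def)
  qed
  have sumd: "(\<Sum>b\<in>BC. card (lext X b) - 1) + card BC = (\<Sum>b\<in>BC. card (lext X b))"
  proof -
    have "(\<Sum>b\<in>BC. card (lext X b) - 1) + (\<Sum>b\<in>BC. 1) = (\<Sum>b\<in>BC. card (lext X b) - 1 + 1)"
      unfolding sum.distrib by simp
    also have "\<dots> = (\<Sum>b\<in>BC. card (lext X b))"
      by (rule sum.cong) (auto dest!: BC_B simp: Bset_def)
    finally show ?thesis by simp
  qed
  show "card (orbit ` C) = 1 + (\<Sum>b\<in>BC. card (lext X b) - 1)"
    using c sum1 O1_card cPP cIm card_NI cBC sumd by linarith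
qed

end


lemma class_card:
  fixes X :: "(int \<Rightarrow> 'a::finite) set"
  assumes ss: "is_shift_space X" and finB: "finite (Bset X)" and x: "x \<in> X"
  shows "finite (orbit ` asym_eqclass X x)"
    and "card (orbit ` asym_eqclass X x) = 1 + (\<Sum>b\<in>{b\<in>Bset X. \<exists>y\<in>asym_eqclass X x. ray y 0 = b}. card (lext X b) - 1)"
proof -
  interpret cls X x using ss finB x by unfold_locales
  show "finite (orbit ` asym_eqclass X x)" using class_formula(1) .
  show "card (orbit ` asym_eqclass X x) = 1 + (\<Sum>b\<in>{b\<in>Bset X. \<exists>y\<in>asym_eqclass X x. ray y 0 = b}. card (lext X b) - 1)"
    using class_formula(2) by (simp add: BC_def)
qed

lemma eqclass_eq:
  assumes "x \<in> X" "x' \<in> X"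
  shows "asym_eqclass X x = asym_eqclass X x' \<longleftrightarrow> right_asym x x'"
proof
  assume "asym_eqclass X x = asym_eqclass X x'"
  moreover have "x' \<in> asym_eqclass X x'" using assms right_asym_refl by (simp add: asym_eqclass_def)
  ultimately have "x' \<in> asym_eqclass X x" by simp
  thus "right_asym x x'" by (simp add: asym_eqclass_def)
next
  assume r: "right_asym x x'"
  show "asym_eqclass X x = asym_eqclass X x'"
  proof (intro set_eqI iffI)
    fix y assume "y \<in> asym_eqclass X x"
    hence "y \<in> X" "right_asym x y" by (auto simp: asym_eqclass_def)
    moreover have "right_asym x' y" using right_asym_trans[OF right_asym_sym[OF r] \<open>right_asym x y\<close>] .
    ultimately show "y \<in> asym_eqclass X x'" by (simp add: asym_eqclass_def)
  next
    fix y assume "y \<in> asym_eqclass X x'"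
    hence "y \<in> X" "right_asym x' y" by (auto simp: asym_eqclass_def)
    moreover have "right_asym x y" using right_asym_trans[OF r \<open>right_asym x' y\<close>] .
    ultimately show "y \<in> asym_eqclass X x" by (simp add: asym_eqclass_def)
  qed
qed

lemma OMEGA:
  fixes X :: "(int \<Rightarrow> 'a::finite) set"
  assumes ss: "is_shift_space X" and finB: "finite (Bset X)"
  shows "omega X = enat (\<Sum>u\<in>Bset X. card (lext X u) - 1)"
proof -
  let ?B = "Bset X"
  define pt where "pt b = (SOME y. y \<in> X \<and> ray y 0 = b)" for b
  have pt: "pt b \<in> X \<and> ray (pt b) 0 = b" if "b \<in> ?B" for b
  proof -
    have "\<exists>y. y \<in> X \<and> ray y 0 = b" using K2[OF ss] that by (auto simp: Bset_def)
    thus ?thesis unfolding pt_def by (rule someI_ex)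
  qed
  define cl where "cl b = asym_eqclass X (pt b)" for b
  define BCx where "BCx x = {b\<in>?B. \<exists>y\<in>asym_eqclass X x. ray y 0 = b}" for x
  have BCx_iff: "b \<in> BCx x \<longleftrightarrow> b \<in> ?B \<and> cl b = asym_eqclass X x" if x: "x \<in> X" for x b
  proof
    assume b: "b \<in> BCx x"
    then obtain y where y: "y \<in> asym_eqclass X x" "ray y 0 = b" and bB: "b \<in> ?B" by (auto simp: BCx_def)
    have "right_asym y (pt b)" using pt[OF bB] y(2) by (metis right_asym_ray)
    moreover have "right_asym x y" using y(1) by (simp add: asym_eqclass_def)
    ultimately have "right_asym x (pt b)" using right_asym_trans by blast
    hence "asym_eqclass X x = asym_eqclass X (pt b)" using eqclass_eq[OF x] pt[OF bB] by simp
    thus "b \<in> ?B \<and> cl b = asym_eqclass X x" using bB by (simp add: cl_def)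
  next
    assume "b \<in> ?B \<and> cl b = asym_eqclass X x"
    hence bB: "b \<in> ?B" and ce: "cl b = asym_eqclass X x" by auto
    have "pt b \<in> cl b" using pt[OF bB] right_asym_refl by (simp add: cl_def asym_eqclass_def)
    hence "pt b \<in> asym_eqclass X x" using ce by simp
    thus "b \<in> BCx x" using pt[OF bB] bB unfolding BCx_def by blast
  qed
  have cc: "card (orbit ` asym_eqclass X x) = 1 + (\<Sum>b\<in>BCx x. card (lext X b) - 1)"
    and fo: "finite (orbit ` asym_eqclass X x)" if "x \<in> X" for x
    using class_card[OF ss finB that] by (simp_all add: BCx_def)
  have finBCx: "finite (BCx x)" for x using finB by (rule finite_subset[rotated]) (auto simp: BCx_def)
  have pos: "(\<Sum>b\<in>BCx x. card (lext X b) - 1) \<ge> 1 \<longleftrightarrow> BCx x \<noteq> {}" for x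
  proof
    assume "BCx x \<noteq> {}"
    then obtain b where b: "b \<in> BCx x" by blast
    have "1 \<le> card (lext X b) - 1" using b by (auto simp: BCx_def Bset_def)
    also have "\<dots> \<le> (\<Sum>b\<in>BCx x. card (lext X b) - 1)" by (rule member_le_sum[OF b _ finBCx]) simp
    finally show "(\<Sum>b\<in>BCx x. card (lext X b) - 1) \<ge> 1" .
  qed auto
  have two: "(\<exists>y\<in>S. \<exists>z\<in>S. orbit y \<noteq> orbit z) \<longleftrightarrow> card (orbit ` S) \<ge> 2" if f: "finite (orbit ` S)" for S :: "(int \<Rightarrow> 'a) set"
  proof
    assume "\<exists>y\<in>S. \<exists>z\<in>S. orbit y \<noteq> orbit z"
    then obtain y z where "y \<in> S" "z \<in> S" "orbit y \<noteq> orbit z" by blast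
    hence s: "{orbit y, orbit z} \<subseteq> orbit ` S" and c: "card {orbit y, orbit z} = 2" by auto
    have "card {orbit y, orbit z} \<le> card (orbit ` S)" by (rule card_mono[OF f s])
    thus "card (orbit ` S) \<ge> 2" using c by simp
  next
    assume c2: "card (orbit ` S) \<ge> 2"
    show "\<exists>y\<in>S. \<exists>z\<in>S. orbit y \<noteq> orbit z"
    proof (rule ccontr)
      assume "\<not> (\<exists>y\<in>S. \<exists>z\<in>S. orbit y \<noteq> orbit z)"
      hence "\<forall>a\<in>orbit ` S. \<forall>b\<in>orbit ` S. a = b" by blast
      hence "card (orbit ` S) \<le> Suc 0" using card_le_Suc0_iff_eq[OF f] by blast
      thus False using c2 by simp
    qed
  qed
  have AC: "asym_classes X = cl ` ?B"
  proof (intro set_eqI iffI)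
    fix C assume "C \<in> asym_classes X"
    then obtain x where x: "x \<in> X" "C = asym_eqclass X x" and d: "\<exists>y\<in>C. \<exists>z\<in>C. orbit y \<noteq> orbit z"
      by (auto simp: asym_classes_def)
    have "card (orbit ` C) \<ge> 2" using two[OF fo[OF x(1)]] d x(2) by simp
    hence "card (orbit ` asym_eqclass X x) \<ge> 2" using x(2) by simp
    hence "1 \<le> (\<Sum>b\<in>BCx x. card (lext X b) - 1)" using cc[OF x(1)] by linarith
    hence "BCx x \<noteq> {}" using pos[of x] by blast
    then obtain b where "b \<in> BCx x" by blast
    thus "C \<in> cl ` ?B" using BCx_iff[OF x(1)] x(2) by blast
  next
    fix C assume "C \<in> cl ` ?B"
    then obtain b where b: "b \<in> ?B" "C = cl b" by blast
    have ptX: "pt b \<in> X" using pt[OF b(1)] by simp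
    have "b \<in> BCx (pt b)" using BCx_iff[OF ptX] b by (simp add: cl_def)
    hence "card (orbit ` C) \<ge> 2" using cc[OF ptX] pos[of "pt b"] b(2) by (auto simp: cl_def)
    hence "\<exists>y\<in>C. \<exists>z\<in>C. orbit y \<noteq> orbit z" using two fo[OF ptX] b(2) by (simp add: cl_def)
    thus "C \<in> asym_classes X" using ptX b(2) by (auto simp: asym_classes_def cl_def)
  qed
  have finAC: "finite (asym_classes X)" using AC finB by simp
  have finO: "\<forall>C\<in>asym_classes X. finite (orbits_in C)"
    using AC pt fo by (auto simp: orbits_in_def cl_def)
  have "(\<Sum>C\<in>asym_classes X. card (orbits_in C) - 1) = (\<Sum>C\<in>cl ` ?B. \<Sum>b\<in>{b\<in>?B. cl b = C}. card (lext X b) - 1)"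
    unfolding AC
  proof (rule sum.cong[OF refl])
    fix C assume "C \<in> cl ` ?B"
    then obtain b0 where b0: "b0 \<in> ?B" "C = cl b0" by blast
    have ptX: "pt b0 \<in> X" using pt[OF b0(1)] by simp
    have "BCx (pt b0) = {b\<in>?B. cl b = C}" using BCx_iff[OF ptX] b0(2) by (auto simp: cl_def)
    thus "card (orbits_in C) - 1 = (\<Sum>b\<in>{b\<in>?B. cl b = C}. card (lext X b) - 1)"
      using cc[OF ptX] b0(2) by (simp add: orbits_in_def cl_def)
  qed
  also have "\<dots> = (\<Sum>u\<in>?B. card (lext X u) - 1)"
    by (rule sum.image_gen[OF finB, symmetric])
  finally show ?thesis using finAC finO by (simp add: omega_def)
qed



lemma mass:
  fixes X :: "(int \<Rightarrow> 'a::finite) set"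
  assumes w: "w \<in> lang X" and tree: "is_tree (ext_vertices X w) (ext_adj X w)"
  shows "(\<Sum>b\<in>right_ext X w. card (left_ext X (w @ [b])) - 1) = card (left_ext X w) - 1"
proof -
  have ge: "card (left_ext X (w @ [b])) \<ge> 1" if "b \<in> right_ext X w" for b
    using left_ext_ne[of "w @ [b]" X] that by (auto simp: right_ext_def card_gt_0_iff Suc_le_eq)
  have "(\<Sum>b\<in>right_ext X w. card (left_ext X (w @ [b])) - 1) + card (right_ext X w)
      = (\<Sum>b\<in>right_ext X w. card (left_ext X (w @ [b])) - 1 + 1)"
    unfolding sum.distrib by simp
  also have "\<dots> = (\<Sum>b\<in>right_ext X w. card (left_ext X (w @ [b])))"
    by (rule sum.cong) (auto dest: ge)
  also have "\<dots> = card (left_ext X w) + card (right_ext X w) - 1" by (rule ext_count[OF tree])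
  finally have e: "(\<Sum>b\<in>right_ext X w. card (left_ext X (w @ [b])) - 1) + card (right_ext X w)
      = card (left_ext X w) + card (right_ext X w) - 1" .
  have "card (left_ext X w) \<ge> 1" using left_ext_ne[OF w] by (simp add: card_gt_0_iff Suc_le_eq)
  thus ?thesis using e by linarith
qed

lemma left_ext_app_sub: "left_ext X (w @ [b]) \<subseteq> left_ext X w"
  using lang_prefix[of "_ # w" "[b]" X] by (auto simp: left_ext_def)

lemma koenig:
  fixes X :: "(int \<Rightarrow> 'a::finite) set"
  assumes ms: "\<And>v. v \<in> lang X \<Longrightarrow> length v \<ge> m \<Longrightarrow>
      (\<Sum>b\<in>right_ext X v. card (left_ext X (v @ [b])) - 1) = card (left_ext X v) - 1"
    and w: "w \<in> lang X" "length w = n" "n \<ge> m" "card (left_ext X w) \<ge> 2"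
  shows "\<exists>u. u \<in> Bset X \<and> pref n u = w"
proof -
  define Q where "Q v \<longleftrightarrow> v \<in> lang X \<and> length v \<ge> m \<and> card (left_ext X v) \<ge> 2" for v
  have child: "\<exists>b. Q (v @ [b])" if "Q v" for v
  proof (rule ccontr)
    assume nc: "\<not> (\<exists>b. Q (v @ [b]))"
    have "\<forall>b\<in>right_ext X v. card (left_ext X (v @ [b])) - 1 = 0"
    proof
      fix b assume b: "b \<in> right_ext X v"
      have "\<not> Q (v @ [b])" using nc by blast
      thus "card (left_ext X (v @ [b])) - 1 = 0" using b that by (auto simp: Q_def right_ext_def)
    qed
    hence "(\<Sum>b\<in>right_ext X v. card (left_ext X (v @ [b])) - 1) = 0" by simp
    thus False using ms[of v] that by (auto simp: Q_def)
  qed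
  define ws where "ws = rec_nat w (\<lambda>k v. v @ [SOME b. Q (v @ [b])])"
  have ws0: "ws 0 = w" and wsS: "\<And>k. ws (Suc k) = ws k @ [SOME b. Q (ws k @ [b])]"
    by (simp_all add: ws_def)
  have Qk: "Q (ws k)" for k
  proof (induction k)
    case 0 then show ?case using w ws0 by (simp add: Q_def)
  next
    case (Suc k)
    then show ?case using someI_ex[OF child[OF Suc]] by (simp add: wsS)
  qed
  have len: "length (ws k) = n + k" for k by (induction k) (auto simp: ws0 wsS w)
  have pre: "ws (k + j) ! i = ws k ! i" if "i < n + k" for k j i
    using that by (induction j) (auto simp: wsS nth_append len)
  define u where "u i = ws (Suc i) ! i" for i
  have pu: "pref (n + k) u = ws k" for k
  proof (rule nth_equalityI)
    fix i assume "i < length (pref (n + k) u)"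
    hence i: "i < n + k" by simp
    have "ws (Suc i + k) ! i = ws (Suc i) ! i" using pre[of i "Suc i" k] by simp
    moreover have "ws (k + Suc i) ! i = ws k ! i" using pre[of i k "Suc i", OF i] .
    ultimately show "pref (n + k) u ! i = ws k ! i" using i by (simp add: u_def add.commute)
  qed (simp add: len)
  have isr: "isray X u"
  proof -
    have "pref k u \<in> lang X" for k
    proof -
      have "ws k \<in> lang X" using Qk[of k] by (simp add: Q_def)
      hence "take k (ws k) \<in> lang X" by (rule lang_take)
      moreover have "pref k u = take k (pref (n + k) u)" by (simp add: take_pref)
      ultimately show ?thesis by (simp add: pu)
    qed
    thus ?thesis by (simp add: isray_def)
  qed
  obtain N where N: "\<And>k. k \<ge> N \<Longrightarrow> left_ext X (pref k u) = lext X u" using K5 by blast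
  have "left_ext X (pref (n + N) u) = lext X u" using N by simp
  hence "card (lext X u) \<ge> 2" using Qk[of N] pu[of N] by (simp add: Q_def)
  hence "u \<in> Bset X" using isr by (simp add: Bset_def)
  moreover have "pref n u = w" using pu[of 0] ws0 by simp
  ultimately show ?thesis by blast
qed

lemma lsum_rest_zero:
  fixes X :: "(int \<Rightarrow> 'a::finite) set"
  assumes "(\<Sum>w\<in>S. card (left_ext X w) - 1) = 0" "finite S" "w \<in> S"
  shows "card (left_ext X w) \<le> 1"
  using assms by (simp add: sum_eq_0_iff)

theorem mainTheorem6:
  fixes X :: "(int \<Rightarrow> 'a::finite) set"
  assumes "is_shift_space X"
  shows "eventually_dendric X \<longleftrightarrow>
           ((\<exists>N c. \<forall>n\<ge>N. s_cplx X n = c)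
            \<and> (\<lambda>n. ereal (real_of_int (s_cplx X n))) \<longlonglongrightarrow> ereal_of_enat (omega X))"
proof
  note ss = assms
  let ?B = "Bset X"
  assume "eventually_dendric X"
  then obtain m where md: "\<And>w. w \<in> lang X \<Longrightarrow> length w \<ge> m \<Longrightarrow> is_tree (ext_vertices X w) (ext_adj X w)"
    by (auto simp: eventually_dendric_def)
  have ms: "\<And>v. v \<in> lang X \<Longrightarrow> length v \<ge> m \<Longrightarrow>
      (\<Sum>b\<in>right_ext X v. card (left_ext X (v @ [b])) - 1) = card (left_ext X v) - 1"
    using mass md by blast
  have step: "lsum X (Suc n) = lsum X n" if "n \<ge> m" for n
  proof -
    have "lsum X (Suc n) = (\<Sum>w\<in>lang_n X n. \<Sum>b\<in>right_ext X w. card (left_ext X (w @ [b])) - 1)"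
      by (rule lsum_Suc)
    also have "\<dots> = (\<Sum>w\<in>lang_n X n. card (left_ext X w) - 1)"
      by (rule sum.cong[OF refl]) (use ms that in \<open>auto simp: lang_n_def\<close>)
    finally show ?thesis by (simp add: lsum_def)
  qed
  define c where "c = lsum X m"
  have const: "lsum X n = c" if "n \<ge> m" for n
    using that
  proof (induction n)
    case 0 then show ?case by (simp add: c_def)
  next
    case (Suc n)
    then show ?case
    proof (cases "Suc n = m")
      case True then show ?thesis by (simp add: c_def)
    next
      case False
      hence "n \<ge> m" using Suc by simp
      then show ?thesis using Suc step by simp
    qed
  qed
  have finB: "finite ?B" using P3(1)[OF const] by blast
  obtain N1 where N1: "\<And>n. n \<ge> N1 \<Longrightarrow> inj_on (\<lambda>u. pref n u) ?B \<and> (\<forall>u\<in>?B. left_ext X (pref n u) = lext X u)"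
    using P1[OF finB] by blast
  define n where "n = max m N1"
  have dec: "lsum X n = (\<Sum>u\<in>?B. card (lext X u) - 1)
          + (\<Sum>w\<in>lang_n X n - (\<lambda>u. pref n u) ` ?B. card (left_ext X w) - 1)"
    using N1[of n] by (intro lsum_decomp[OF finB]) (auto simp: n_def Bset_def)
  have rest0: "(\<Sum>w\<in>lang_n X n - (\<lambda>u. pref n u) ` ?B. card (left_ext X w) - 1) = 0"
  proof (rule sum.neutral, rule ballI)
    fix w assume w: "w \<in> lang_n X n - (\<lambda>u. pref n u) ` ?B"
    show "card (left_ext X w) - 1 = 0"
    proof (rule ccontr)
      assume "card (left_ext X w) - 1 \<noteq> 0"
      hence "card (left_ext X w) \<ge> 2" by simp
      then obtain u where "u \<in> ?B" "pref n u = w"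
        using koenig[where X=X and m=m and w=w and n=n, OF ms] w by (auto simp: lang_n_def n_def)
      thus False using w by blast
    qed
  qed
  have cB: "c = (\<Sum>u\<in>?B. card (lext X u) - 1)" using dec rest0 const[of n] by (simp add: n_def)
  have om: "omega X = enat c" using OMEGA[OF ss finB] cB by simp
  have sc: "s_cplx X k = int c" if "k \<ge> m" for k using s_eq[of X k] const[OF that] by simp
  show "(\<exists>N c. \<forall>n\<ge>N. s_cplx X n = c)
            \<and> (\<lambda>n. ereal (real_of_int (s_cplx X n))) \<longlonglongrightarrow> ereal_of_enat (omega X)"
  proof
    show "\<exists>N c. \<forall>n\<ge>N. s_cplx X n = c" using sc by blast
    have "eventually (\<lambda>k. ereal (real_of_int (s_cplx X k)) = ereal_of_enat (omega X)) sequentially"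
      unfolding eventually_sequentially using sc om by (intro exI[of _ m]) auto
    thus "(\<lambda>n. ereal (real_of_int (s_cplx X n))) \<longlonglongrightarrow> ereal_of_enat (omega X)"
      by (rule tendsto_eventually)
  qed
next
  note ss = assms
  let ?B = "Bset X"
  assume rhs: "(\<exists>N c. \<forall>n\<ge>N. s_cplx X n = c)
            \<and> (\<lambda>n. ereal (real_of_int (s_cplx X n))) \<longlonglongrightarrow> ereal_of_enat (omega X)"
  then obtain N c where Nc: "\<And>n. n \<ge> N \<Longrightarrow> s_cplx X n = c" by blast
  define c' where "c' = lsum X N"
  have const: "lsum X n = c'" if "n \<ge> N" for n
    using Nc[OF that] Nc[of N] s_eq[of X n] s_eq[of X N] by (simp add: c'_def)
  have finB: "finite ?B" using P3(1)[OF const] by blast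
  have om: "omega X = enat (\<Sum>u\<in>?B. card (lext X u) - 1)" using OMEGA[OF ss finB] .
  have lim1: "(\<lambda>n. ereal (real_of_int (s_cplx X n))) \<longlonglongrightarrow> ereal (real c')"
  proof (rule tendsto_eventually)
    show "eventually (\<lambda>n. ereal (real_of_int (s_cplx X n)) = ereal (real c')) sequentially"
      unfolding eventually_sequentially
    proof (intro exI[of _ N] allI impI)
      fix n assume "N \<le> n"
      thus "ereal (real_of_int (s_cplx X n)) = ereal (real c')" using const s_eq[of X n] by simp
    qed
  qed
  have "ereal (real c') = ereal_of_enat (omega X)" using LIMSEQ_unique[OF lim1] rhs by blast
  hence "ereal (real c') = ereal (real (\<Sum>u\<in>?B. card (lext X u) - 1))" using om by (simp only: ereal_of_enat_simps)
  hence cB: "c' = (\<Sum>u\<in>?B. card (lext X u) - 1)" by (simp only: ereal.inject of_nat_eq_iff)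
  obtain N1 where N1: "\<And>n. n \<ge> N1 \<Longrightarrow> inj_on (\<lambda>u. pref n u) ?B \<and> (\<forall>u\<in>?B. left_ext X (pref n u) = lext X u)"
    using P1[OF finB] by blast
  define m where "m = max N N1"
  have LS: "w \<in> (\<lambda>u. pref n u) ` ?B" if "n \<ge> m" "w \<in> lang_n X n" "card (left_ext X w) \<ge> 2" for n w
  proof (rule ccontr)
    assume nw: "w \<notin> (\<lambda>u. pref n u) ` ?B"
    have "lsum X n = (\<Sum>u\<in>?B. card (lext X u) - 1)
          + (\<Sum>w\<in>lang_n X n - (\<lambda>u. pref n u) ` ?B. card (left_ext X w) - 1)"
      using N1[of n] that(1) by (intro lsum_decomp[OF finB]) (auto simp: m_def Bset_def)
    moreover have "lsum X n = c'" using const that(1) by (simp add: m_def)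
    ultimately have "(\<Sum>w\<in>lang_n X n - (\<lambda>u. pref n u) ` ?B. card (left_ext X w) - 1) = 0" using cB by simp
    hence "card (left_ext X w) \<le> 1"
      by (rule lsum_rest_zero) (use nw that(2) finite_lang_n in auto)
    thus False using that(3) by simp
  qed
  show "eventually_dendric X"
    unfolding eventually_dendric_def
  proof (intro exI[of _ m] ballI impI)
    fix w assume wL: "w \<in> lang X" and wm: "m \<le> length w"
    define n where "n = length w"
    let ?A = "left_ext X w" and ?R = "right_ext X w"
    define E where "E a b \<longleftrightarrow> a # w @ [b] \<in> lang X" for a b
    have Ane: "?A \<noteq> {}" by (rule left_ext_ne[OF wL])
    have Rne: "?R \<noteq> {}" by (rule right_ext_ne[OF wL])
    have Ein: "a \<in> ?A \<and> b \<in> ?R" if "E a b" for a b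
    proof -
      have q: "(a # w) @ [b] \<in> lang X" using that by (simp add: E_def)
      have "[a] @ (w @ [b]) \<in> lang X" using q by simp
      thus ?thesis using lang_prefix[OF q] lang_suffix[OF \<open>[a] @ (w @ [b]) \<in> lang X\<close>]
        by (simp add: left_ext_def right_ext_def)
    qed
    have Eb: "E a b \<longleftrightarrow> a \<in> left_ext X (w @ [b])" for a b by (simp add: E_def left_ext_def)
    have lne: "left_ext X (w @ [b]) \<noteq> {}" if "b \<in> ?R" for b
      using left_ext_ne[of "w @ [b]" X] that by (simp add: right_ext_def)
    have finA: "finite (left_ext X v)" for v by simp
    obtain b0 where b0: "b0 \<in> ?R" and all: "\<And>a. a \<in> ?A \<Longrightarrow> E a b0"
      and uniq: "\<And>b. b \<in> ?R \<Longrightarrow> b \<noteq> b0 \<Longrightarrow> \<exists>!a. E a b"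
    proof (cases "card ?A \<ge> 2")
      case True
      have "w \<in> lang_n X n" using wL by (simp add: lang_n_def n_def)
      then obtain u where uB: "u \<in> ?B" and pu: "pref n u = w" using LS[of n w] True wm by (auto simp: n_def)
      have nN1: "n \<ge> N1" "Suc n \<ge> N1" using wm by (auto simp: n_def m_def)
      have pSu: "pref (Suc n) u = w @ [u n]" using pu by (simp add: pref_Suc)
      have b0R: "u n \<in> ?R" using uB pSu by (auto simp: Bset_def isray_def right_ext_def dest: spec[of _ "Suc n"])
      have lA: "left_ext X (w @ [u n]) = ?A"
        using N1[OF nN1(1)] N1[OF nN1(2)] uB pu pSu by metis
      have uq: "\<exists>!a. E a b" if b: "b \<in> ?R" "b \<noteq> u n" for b
      proof -
        have c1: "card (left_ext X (w @ [b])) \<le> 1"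
        proof (rule ccontr)
          assume "\<not> card (left_ext X (w @ [b])) \<le> 1"
          hence c2: "card (left_ext X (w @ [b])) \<ge> 2" by simp
          have "w @ [b] \<in> lang_n X (Suc n)" using b by (simp add: lang_n_def right_ext_def n_def)
          then obtain u' where u'B: "u' \<in> ?B" and pu': "pref (Suc n) u' = w @ [b]"
            using LS[of "Suc n" "w @ [b]"] c2 wm by (auto simp: n_def)
          have "pref n u' = w" using pu' by (simp add: pref_Suc)
          hence "u' = u" using N1[OF nN1(1)] u'B uB pu by (auto simp: inj_on_def)
          thus False using pu' pSu b(2) by simp
        qed
        obtain a where "left_ext X (w @ [b]) = {a}"
          using c1 lne[OF b(1)] by (metis card_1_singletonE card_gt_0_iff finA le_antisym Suc_le_eq One_nat_def)
        thus ?thesis by (auto simp: Eb)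
      qed
      show ?thesis by (rule that[of "u n"]) (use b0R lA uq in \<open>auto simp: Eb\<close>)
    next
      case False
      moreover have "card ?A > 0" using Ane by (simp add: card_gt_0_iff)
      ultimately have "card ?A = 1" by linarith
      then obtain a0 where A0: "?A = {a0}" by (rule card_1_singletonE)
      obtain b0 where b0: "b0 \<in> ?R" using Rne by blast
      have single: "left_ext X (w @ [b]) = {a0}" if "b \<in> ?R" for b
        using lne[OF that] left_ext_app_sub[of X w b] A0 subset_singletonD by metis
      show ?thesis by (rule that[of b0]) (use b0 single A0 in \<open>auto simp: Eb\<close>)
    qed
    show "is_tree (ext_vertices X w) (ext_adj X w)"
      unfolding ext_vertices_def
    proof (rule star_tree[where E = E, OF Ane b0])
      fix a b show "ext_adj X w (Inl a) (Inr b) = E a b" by (simp add: E_def)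
    next
      fix a b show "ext_adj X w (Inr b) (Inl a) = E a b" by (simp add: E_def)
    next
      fix a a' show "\<not> ext_adj X w (Inl a) (Inl a')" by simp
    next
      fix b b' show "\<not> ext_adj X w (Inr b) (Inr b')" by simp
    next
      fix a b assume "E a b" thus "a \<in> ?A \<and> b \<in> ?R" by (rule Ein)
    next
      fix a assume "a \<in> ?A" thus "E a b0" by (rule all)
    next
      fix b assume "b \<in> ?R" "b \<noteq> b0" thus "\<exists>!a. E a b" by (rule uniq)
    qed
  qed
qed



end
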